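(* Let $\mathbf{x}_\nu \in \mathbb{R}^n$, $\nu \in N$, be fixed linearly independent vectors, where $N$ is a finite set with $p := \#N < n - 1$, and let $\mathbb{V}_N := \mathrm{span}(\mathbf{x}_\nu : \nu \in N)$. Let $\mathbf{y}$ be a random vector in $\mathbb{R}^n$, let $\widehat{\mathbf{y}}$ be the orthogonal projection of $\mathbf{y}$ onto $\mathbb{V}_N$ and $\widehat{\boldsymbol{\epsilon}} := \mathbf{y} - \widehat{\mathbf{y}}$. Then the following three statements are equivalent: (i) For every fixed $\mathbf{S} \in \mathbb{O}_n(\mathbb{V}_N)$, $\mathcal{L}(\mathbf{S}\mathbf{y}) = \mathcal{L}(\mathbf{y})$. (ii) If $\mathbf{T}$ is a random matrix with distribution $\mathrm{Haar}_{n,\mathbb{V}_N}$ such that $\mathbf{y}$ and $\mathbf{T}$ are stochastically independent, then $\mathcal{L}(\mathbf{T}\mathbf{y}) = \mathcal{L}(\mathbf{y})$. (iii) If $\mathbf{u}$ is a random vector with uniform distribution on the unit sphere of $\mathbb{V}_N^\perp$ such that $\mathbf{y}$ and $\mathbf{u}$ are stochastically independent, then $\mathcal{L}(\mathbf{y}) = \mathcal{L}\bigl(\widehat{\mathbf{y}} + \|\widehat{\boldsymbol{\epsilon}}\| \mathbf{u}\bigr)$.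
   Context: $\mathcal{L}(\cdot)$ denotes the distribution (law) of a random object. $\mathbb{O}_n$ is the set of orthogonal $n\times n$ real matrices. For a linear subspace $\mathbb{V}$ of $\mathbb{R}^n$ with $\dim(\mathbb{V}) < n$, $\mathbb{O}_n(\mathbb{V}) := \{\mathbf{S} \in \mathbb{O}_n : \mathbf{S}\mathbf{v} = \mathbf{v} \text{ for all } \mathbf{v} \in \mathbb{V}\}$. Normalized Haar measure $\mathrm{Haar}_{n,\mathbb{V}}$ on $\mathbb{O}_n(\mathbb{V})$ is the unique probability distribution on $\mathbb{O}_n(\mathbb{V})$ such that a random matrix $\mathbf{T} \sim \mathrm{Haar}_{n,\mathbb{V}}$ satisfies $\mathcal{L}(\mathbf{S}\mathbf{T}) = \mathcal{L}(\mathbf{T})$ for every fixed $\mathbf{S} \in \mathbb{O}_n(\mathbb{V})$. $\mathbb{V}_N^\perp$ is the orthogonal complement of $\mathbb{V}_N$ in $\mathbb{R}^n$. *)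

theory Defs
  imports "HOL-Analysis.Analysis" "HOL-Probability.Probability"
begin

text \<open>The group O_n(V) of orthogonal n x n matrices fixing every vector of V.\<close>
definition orth_fix :: "(real^'n) set \<Rightarrow> (real^'n^'n) set" where
  "orth_fix V = {S. orthogonal_matrix S \<and> (\<forall>v\<in>V. S *v v = v)}"

text \<open>Normalized Haar measure on O_n(V): the unique probability distribution
  (on the Borel sets of the matrix space) concentrated on O_n(V) that is
  invariant under left multiplication by every fixed S in O_n(V).\<close>
definition Haar_fix :: "(real^'n) set \<Rightarrow> (real^'n^'n) measure" where
  "Haar_fix V = (THE \<mu>. sets \<mu> = sets borel \<and> prob_space \<mu> \<and> emeasure \<mu> (orth_fix V) = 1 \<and>
       (\<forall>S\<in>orth_fix V. distr \<mu> borel (\<lambda>T. S ** T) = \<mu>))"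

text \<open>Uniform distribution on the unit sphere of the subspace W: the unique
  probability distribution concentrated on the unit sphere of W that is invariant
  under every orthogonal map of the ambient space preserving W pointwise-orthogonally,
  i.e. under every S in O_n(W^perp) (the rotations of W).\<close>
definition unif_sphere :: "(real^'n) set \<Rightarrow> (real^'n) measure" where
  "unif_sphere W = (THE \<mu>. sets \<mu> = sets borel \<and> prob_space \<mu> \<and>
       emeasure \<mu> (W \<inter> sphere 0 1) = 1 \<and>
       (\<forall>S\<in>orth_fix (orthogonal_comp W). distr \<mu> borel (\<lambda>u. S *v u) = \<mu>))"

text \<open>Orthogonal projection of v onto the subspace V.\<close>
definition orth_proj :: "(real^'n) set \<Rightarrow> real^'n \<Rightarrow> real^'n" where
  "orth_proj V v = (THE w. w \<in> V \<and> v - w \<in> orthogonal_comp V)"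

end

theory Submission
  imports Defs
begin

typedef 'n wo = "UNIV :: 'n set" by auto
instance wo :: (finite) finite
proof
  have "finite (range (Abs_wo :: 'a \<Rightarrow> 'a wo))" by simp
  moreover have "range (Abs_wo :: 'a \<Rightarrow> 'a wo) = UNIV"
    by (metis Abs_wo_cases UNIV_I surjI type_definition.Rep_inverse type_definition_wo)
  ultimately show "finite (UNIV :: 'a wo set)" by simp
qed
instantiation wo :: (finite) wellorder
begin
definition "less_eq_wo (x::'a wo) (y::'a wo) \<longleftrightarrow> to_nat (Rep_wo x) \<le> to_nat (Rep_wo y)"
definition "less_wo (x::'a wo) (y::'a wo) \<longleftrightarrow> to_nat (Rep_wo x) < to_nat (Rep_wo y)"
instance
proof
  fix x y z :: "'a wo"
  show "(x < y) = (x \<le> y \<and> \<not> y \<le> x)" by (auto simp: less_eq_wo_def less_wo_def)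
  show "x \<le> x" by (auto simp: less_eq_wo_def)
  show "x \<le> y \<Longrightarrow> y \<le> z \<Longrightarrow> x \<le> z" by (auto simp: less_eq_wo_def)
  show "x \<le> y \<Longrightarrow> y \<le> x \<Longrightarrow> x = y" by (auto simp: less_eq_wo_def Rep_wo_inject)
  show "x \<le> y \<or> y \<le> x" by (auto simp: less_eq_wo_def)
next
  fix P :: "'a wo \<Rightarrow> bool" and a
  assume H: "\<And>x. (\<And>y. y < x \<Longrightarrow> P y) \<Longrightarrow> P x"
  have "\<forall>x. to_nat (Rep_wo x) = n \<longrightarrow> P x" for n
  proof (induction n rule: less_induct)
    case (less n) then show ?case using H by (auto simp: less_wo_def)
  qed
  then show "P a" by blast
qed
end

lemma lborel_orth_wo:
  fixes f :: "real^'m::{finite,wellorder} \<Rightarrow> real^'m::{finite,wellorder}"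
  assumes f: "orthogonal_transformation f"
  shows "distr lborel borel f = lborel"
proof -
  have lf: "linear f" using f by (simp add: orthogonal_transformation_linear)
  have cf: "continuous_on UNIV f" using lf by (simp add: linear_continuous_on linear_linear)
  have mf: "f \<in> borel_measurable borel" using cf by (simp add: borel_measurable_continuous_onI)
  define g where "g = inv f"
  have g: "orthogonal_transformation g" using f by (simp add: g_def orthogonal_transformation_inv)
  have bij: "bij f" using f by (simp add: orthogonal_transformation_bij)
  have pre: "f -` X = g ` X" for X
    using bij unfolding g_def by (simp add: bij_vimage_eq_inv_image)
  show ?thesis
  proof (rule lborel_eqI[symmetric])
    fix l u :: "real^'m::{finite,wellorder}" assume le: "\<And>b. b \<in> Basis \<Longrightarrow> l \<bullet> b \<le> u \<bullet> b"
    have op: "open (f -` box l u)" using cf open_vimage[of "box l u" f] open_box by blast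
    have bd: "bounded (g ` box l u)"
      using g by (simp add: bounded_linear_image orthogonal_transformation_linear linear_linear)
    have lm: "box l u \<in> lmeasurable" by simp
    have "emeasure (distr lborel borel f) (box l u) = emeasure lborel (f -` box l u)"
      using mf by (simp add: emeasure_distr)
    also have "\<dots> = emeasure lebesgue (f -` box l u)"
      using op by (simp add: emeasure_completion borel_open)
    also have "\<dots> = ennreal (measure lebesgue (g ` box l u))"
      using bd op unfolding pre
      by (metis emeasure_eq_measure2 fmeasurableD2 lmeasurable_open pre)
    also have "\<dots> = ennreal (measure lebesgue (box l u))"
      using measure_orthogonal_image[OF g lm] by simp
    also have "\<dots> = emeasure lborel (box l u)"
      by (metis emeasure_eq_measure2 fmeasurable_box lmeasurable_box measure_completion sets_lborel box_borel emeasure_completion)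
    also have "\<dots> = (\<Prod>b\<in>Basis. (u - l) \<bullet> b)"
      using le by (simp add: emeasure_lborel_box_eq inner_diff_left)
    finally show "emeasure (distr lborel borel f) (box l u) = (\<Prod>b\<in>Basis. (u - l) \<bullet> b)" .
  qed simp
qed

lemma linear_borel_measurable:
  fixes f :: "'a::euclidean_space \<Rightarrow> 'b::euclidean_space"
  assumes "linear f" shows "f \<in> borel_measurable borel"
  using assms by (intro borel_measurable_continuous_onI linear_continuous_on linear_conv_bounded_linear[THEN iffD1])

lemma prod_Basis_vec: "(\<Prod>b\<in>(Basis::(real^'n) set). h b) = (\<Prod>i\<in>UNIV. h (axis i 1))"
proof -
  have B: "(Basis::(real^'n) set) = range (\<lambda>i::'n. axis i (1::real))"
    by (auto simp: Basis_vec_def)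
  have "inj (\<lambda>i::'n. axis i (1::real))" by (auto simp: inj_on_def axis_eq_axis)
  then show ?thesis unfolding B by (simp add: prod.reindex)
qed

lemma all_wo: "(\<forall>i. P i) \<longleftrightarrow> (\<forall>j. P (Abs_wo j))"
  by (metis Abs_wo_cases)

lemma bij_Abs_wo: "bij Abs_wo" and bij_Rep_wo: "bij Rep_wo"
  by (metis Abs_wo_inverse Rep_wo_inverse UNIV_I bij_betw_byWitness subset_UNIV)+

definition Rwo :: "real^'n \<Rightarrow> real^('n wo)" where "Rwo x = (\<chi> i. x $ Rep_wo i)"
definition Riwo :: "real^('n wo) \<Rightarrow> real^'n" where "Riwo y = (\<chi> j. y $ Abs_wo j)"

lemma Rwo_Riwo[simp]: "Rwo (Riwo y) = y" "Riwo (Rwo x) = x"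
  by (auto simp: Rwo_def Riwo_def vec_eq_iff Rep_wo_inverse Abs_wo_inverse)

lemma linear_Rwo: "linear Rwo" and linear_Riwo: "linear Riwo"
  by (auto simp: linear_iff Rwo_def Riwo_def vec_eq_iff)

lemma inner_Rwo: "Rwo x \<bullet> Rwo y = x \<bullet> y"
proof -
  have "Rwo x \<bullet> Rwo y = (\<Sum>i\<in>UNIV. x $ Rep_wo i * y $ Rep_wo i)"
    by (simp add: inner_vec_def Rwo_def)
  also have "\<dots> = (\<Sum>j\<in>UNIV. x $ j * y $ j)"
    by (rule sum.reindex_bij_betw[OF bij_Rep_wo])
  also have "\<dots> = x \<bullet> y" by (simp add: inner_vec_def)
  finally show ?thesis .
qed

lemma lborel_Rwo: "distr lborel borel (Rwo :: real^'n \<Rightarrow> _) = lborel"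
proof (rule lborel_eqI[symmetric])
  fix l u :: "real^('n wo)" assume le: "\<And>b. b \<in> Basis \<Longrightarrow> l \<bullet> b \<le> u \<bullet> b"
  have m: "Rwo \<in> borel_measurable (borel :: (real^'n) measure)"
    by (rule linear_borel_measurable[OF linear_Rwo])
  have pre: "Rwo -` box l u = box (Riwo l) (Riwo u)"
    unfolding set_eq_iff vimage_eq mem_box_cart Rwo_def Riwo_def vec_lambda_beta all_wo
    by (simp add: Abs_wo_inverse)
  have le': "Riwo l $ i \<le> Riwo u $ i" for i
    using le[of "axis (Abs_wo i) 1"] by (auto simp: Riwo_def Basis_vec_def inner_axis)
  have "emeasure (distr lborel borel Rwo) (box l u) = emeasure lborel (box (Riwo l) (Riwo u))"
    using m by (simp add: emeasure_distr pre)
  also have "\<dots> = (\<Prod>b\<in>Basis. (Riwo u - Riwo l) \<bullet> b)"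
    using le' by (subst emeasure_lborel_box_eq) (auto simp: Basis_vec_def cart_eq_inner_axis inner_commute)
  also have "\<dots> = (\<Prod>j\<in>UNIV. (u - l) $ Abs_wo j)"
    by (simp add: prod_Basis_vec inner_axis Riwo_def)
  also have "\<dots> = (\<Prod>i\<in>UNIV. (u - l) $ i)"
    by (rule arg_cong[where f=ennreal], rule prod.reindex_bij_betw[OF bij_Abs_wo])
  also have "\<dots> = (\<Prod>b\<in>Basis. (u - l) \<bullet> b)"
    by (simp add: prod_Basis_vec inner_axis)
  finally show "emeasure (distr lborel borel Rwo) (box l u) = (\<Prod>b\<in>Basis. (u - l) \<bullet> b)" .
qed simp

lemma lborel_orth:
  fixes S :: "real^'n^'n"
  assumes S: "orthogonal_matrix S"
  shows "distr lborel borel ((*v) S) = lborel"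
proof -
  define f where "f y = Rwo (S *v Riwo y)" for y
  have lf: "linear f" unfolding f_def
    using linear_compose[OF linear_compose[OF linear_Riwo matrix_vector_mul_linear[of S]] linear_Rwo]
    by (simp add: o_def)
  have "orthogonal_transformation ((*v) S)"
    using S by (simp add: orthogonal_transformation_matrix matrix_vector_mul_linear)
  then have of: "orthogonal_transformation f"
    using lf unfolding orthogonal_transformation_def f_def
    by (metis inner_Rwo Rwo_Riwo(1))
  have eq: "(*v) S = Riwo \<circ> f \<circ> Rwo" by (auto simp: f_def fun_eq_iff)
  have mR: "Rwo \<in> borel_measurable (borel :: (real^'n) measure)"
    by (rule linear_borel_measurable[OF linear_Rwo])
  have mRi: "Riwo \<in> borel_measurable (borel :: (real^('n wo)) measure)"
    by (rule linear_borel_measurable[OF linear_Riwo])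
  have mf: "f \<in> borel_measurable borel" by (rule linear_borel_measurable[OF lf])
  have Ri: "distr lborel borel (Riwo :: _ \<Rightarrow> real^'n) = lborel"
  proof -
    have "distr lborel borel (Riwo :: _ \<Rightarrow> real^'n) = distr (distr lborel borel Rwo) borel Riwo"
      by (simp add: lborel_Rwo)
    also have "\<dots> = distr lborel borel (Riwo \<circ> Rwo)"
      using mR mRi by (subst distr_distr) auto
    also have "\<dots> = lborel" by (simp add: o_def distr_id2)
    finally show ?thesis .
  qed
  have "distr lborel borel ((*v) S) = distr (distr (distr lborel borel Rwo) borel f) borel Riwo"
    using mR mRi mf by (simp add: distr_distr eq comp_assoc)
  also have "\<dots> = lborel" by (simp add: lborel_Rwo lborel_orth_wo[OF of] Ri)
  finally show ?thesis .
qed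


section \<open>Orthogonal projection\<close>

lemma orth_proj_unique:
  fixes V :: "(real^'n) set"
  assumes V: "subspace V" and w: "w \<in> V" "v - w \<in> orthogonal_comp V"
  shows "orth_proj V v = w"
  unfolding orth_proj_def
proof (rule the_equality)
  show "w \<in> V \<and> v - w \<in> orthogonal_comp V" using w by blast
  fix w' assume w': "w' \<in> V \<and> v - w' \<in> orthogonal_comp V"
  have "w' - w \<in> V" using V w w' by (simp add: subspace_diff)
  moreover have "w' - w = (v - w) - (v - w')" by simp
  then have "w' - w \<in> orthogonal_comp V"
    using w w' subspace_diff[OF subspace_orthogonal_comp] by metis
  ultimately have "w' - w = 0" using orthogonal_Int_0[OF V] by blast
  then show "w' = w" by simp
qed

lemma orth_proj:
  fixes V :: "(real^'n) set"
  assumes V: "subspace V"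
  shows "orth_proj V v \<in> V" "v - orth_proj V v \<in> orthogonal_comp V"
proof -
  obtain a b where ab: "a \<in> V" "b \<in> orthogonal_comp V" "v = a + b"
    using subspace_sum_orthogonal_comp[OF V] set_plus_elim by (metis UNIV_I)
  then have "orth_proj V v = a" by (intro orth_proj_unique[OF V]) auto
  then show "orth_proj V v \<in> V" "v - orth_proj V v \<in> orthogonal_comp V" using ab by auto
qed

lemma orth_proj_linear:
  fixes V :: "(real^'n) set"
  assumes V: "subspace V"
  shows "linear (orth_proj V)"
proof -
  have add: "orth_proj V (a + b) = orth_proj V a + orth_proj V b" for a b
  proof (rule orth_proj_unique[OF V])
    show "orth_proj V a + orth_proj V b \<in> V" using orth_proj[OF V] V by (simp add: subspace_add)
    have "a + b - (orth_proj V a + orth_proj V b) = (a - orth_proj V a) + (b - orth_proj V b)" by simp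
    then show "a + b - (orth_proj V a + orth_proj V b) \<in> orthogonal_comp V"
      using orth_proj[OF V] subspace_add[OF subspace_orthogonal_comp] by metis
  qed
  have sc: "orth_proj V (c *\<^sub>R a) = c *\<^sub>R orth_proj V a" for c a
  proof (rule orth_proj_unique[OF V])
    show "c *\<^sub>R orth_proj V a \<in> V" using orth_proj[OF V] V by (simp add: subspace_scale)
    have "c *\<^sub>R a - c *\<^sub>R orth_proj V a = c *\<^sub>R (a - orth_proj V a)" by (simp add: algebra_simps)
    then show "c *\<^sub>R a - c *\<^sub>R orth_proj V a \<in> orthogonal_comp V"
      using orth_proj[OF V] subspace_scale[OF subspace_orthogonal_comp] by metis
  qed
  show ?thesis using add sc by (simp add: linear_iff)
qed

lemma orth_proj_meas:
  fixes V :: "(real^'n) set"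
  assumes V: "subspace V"
  shows "orth_proj V \<in> borel_measurable borel"
  by (rule linear_borel_measurable[OF orth_proj_linear[OF V]])

lemma orth_proj_cont:
  fixes V :: "(real^'n) set"
  assumes V: "subspace V"
  shows "continuous_on A (orth_proj V)"
  using orth_proj_linear[OF V] by (intro linear_continuous_on linear_conv_bounded_linear[THEN iffD1])

lemma orth_proj_in: 
  fixes V :: "(real^'n) set"
  assumes V: "subspace V" and "v \<in> V" shows "orth_proj V v = v"
  using assms by (intro orth_proj_unique) (auto simp: orthogonal_comp_def orthogonal_def)

section \<open>Orthogonal matrices fixing V\<close>

lemma orth_inner:
  fixes S :: "real^'n^'n"
  assumes "orthogonal_matrix S" shows "(S *v a) \<bullet> (S *v b) = a \<bullet> b"
proof -
  have "orthogonal_transformation ((*v) S)"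
    using assms by (simp add: orthogonal_transformation_matrix)
  then show ?thesis by (simp add: orthogonal_transformation_def)
qed

lemma orth_norm:
  fixes S :: "real^'n^'n"
  assumes "orthogonal_matrix S" shows "norm (S *v a) = norm a"
  using orth_inner[OF assms, of a a] by (simp add: norm_eq_sqrt_inner)

lemma of_orth: "S \<in> orth_fix V \<Longrightarrow> orthogonal_matrix S"
  and of_fix: "S \<in> orth_fix V \<Longrightarrow> v \<in> V \<Longrightarrow> S *v v = v"
  by (auto simp: orth_fix_def)

lemma of_perp:
  assumes S: "S \<in> orth_fix V" and w: "w \<in> orthogonal_comp V"
  shows "S *v w \<in> orthogonal_comp V"
proof -
  have "v \<bullet> (S *v w) = 0" if "v \<in> V" for v
  proof -
    have "v \<bullet> (S *v w) = (S *v v) \<bullet> (S *v w)" using of_fix[OF S that] by simp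
    also have "\<dots> = v \<bullet> w" by (rule orth_inner[OF of_orth[OF S]])
    also have "\<dots> = 0" using w that by (simp add: orthogonal_comp_def orthogonal_def)
    finally show ?thesis .
  qed
  then show ?thesis by (simp add: orthogonal_comp_def orthogonal_def)
qed

lemma of_proj:
  fixes V :: "(real^'n) set"
  assumes V: "subspace V" and S: "S \<in> orth_fix V"
  shows "orth_proj V (S *v v) = orth_proj V v"
proof (rule orth_proj_unique[OF V])
  show "orth_proj V v \<in> V" by (rule orth_proj[OF V])
  have "S *v v - orth_proj V v = S *v (v - orth_proj V v)"
    using of_fix[OF S orth_proj(1)[OF V]] by (simp add: matrix_vector_mult_diff_distrib)
  then show "S *v v - orth_proj V v \<in> orthogonal_comp V"
    using of_perp[OF S orth_proj(2)[OF V]] by simp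
qed

lemma of_mult: "S \<in> orth_fix V \<Longrightarrow> T \<in> orth_fix V \<Longrightarrow> S ** T \<in> orth_fix V"
  by (auto simp: orth_fix_def orthogonal_matrix_mul matrix_vector_mul_assoc[symmetric])

lemma of_id: "mat 1 \<in> orth_fix V"
  by (auto simp: orth_fix_def orthogonal_matrix_id)

lemma of_transpose:
  fixes S :: "real^'n^'n"
  assumes S: "S \<in> orth_fix V" shows "transpose S \<in> orth_fix V"
proof -
  have "transpose S ** S = mat 1" using of_orth[OF S] by (simp add: orthogonal_matrix_def)
  then have "transpose S *v v = v" if "v \<in> V" for v
    using of_fix[OF S that] by (metis matrix_vector_mul_assoc matrix_vector_mul_lid)
  then show ?thesis using of_orth[OF S] by (auto simp: orth_fix_def)
qed

lemma of_anti: "V \<subseteq> V' \<Longrightarrow> orth_fix V' \<subseteq> orth_fix V"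
  by (auto simp: orth_fix_def)

lemma of_UNIV: "orth_fix (UNIV :: (real^'n) set) = {mat 1}"
  by (auto simp: orth_fix_def orthogonal_matrix_id matrix_eq)

lemma continuous_on_mmult[continuous_intros]:
  fixes f g :: "'a::topological_space \<Rightarrow> real^'n^'n"
  assumes "continuous_on A f" "continuous_on A g"
  shows "continuous_on A (\<lambda>x. f x ** g x)"
  unfolding matrix_matrix_mult_def
  by (intro continuous_intros assms)

lemma continuous_on_mvmult[continuous_intros]:
  fixes f :: "'a::topological_space \<Rightarrow> real^'n^'n" and g :: "'a \<Rightarrow> real^'n"
  assumes "continuous_on A f" "continuous_on A g"
  shows "continuous_on A (\<lambda>x. f x *v g x)"
  unfolding matrix_vector_mult_def
  by (intro continuous_intros assms)

lemma continuous_on_transpose[continuous_intros]: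
  fixes f :: "'a::topological_space \<Rightarrow> real^'n^'n"
  assumes "continuous_on A f"
  shows "continuous_on A (\<lambda>x. transpose (f x))"
  unfolding transpose_def
  by (intro continuous_intros assms)

lemma of_closed: "closed (orth_fix (V :: (real^'n) set))"
proof -
  have "orth_fix V = {S. transpose S ** S = mat 1} \<inter> {S. S ** transpose S = mat 1} \<inter> (\<Inter>v\<in>V. {S. S *v v = v})"
    by (auto simp: orth_fix_def orthogonal_matrix_def)
  moreover have "closed {S::real^'n^'n. transpose S ** S = mat 1}"
    by (intro closed_Collect_eq continuous_intros)
  moreover have "closed {S::real^'n^'n. S ** transpose S = mat 1}"
    by (intro closed_Collect_eq continuous_intros)
  moreover have "closed {S::real^'n^'n. S *v v = v}" for v
    by (intro closed_Collect_eq continuous_intros)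
  ultimately show ?thesis by (simp only:) (intro closed_Int closed_INT, auto)
qed

lemma of_borel[measurable]: "orth_fix (V :: (real^'n) set) \<in> sets borel"
  by (rule borel_closed[OF of_closed])

section \<open>Householder reflections\<close>

definition hh :: "real^'n \<Rightarrow> real^'n \<Rightarrow> real^'n^'n" where
  "hh e u = (\<chi> i j. (if i = j then 1 else 0) - 2 / ((e - u) \<bullet> (e - u)) * (e - u) $ i * (e - u) $ j)"

lemma mv_rank1:
  fixes w x :: "real^'n"
  shows "(\<chi> i j. (if i = j then 1 else 0) - c * w $ i * w $ j) *v x = x - (c * (w \<bullet> x)) *\<^sub>R w"
proof -
  have "(\<Sum>j\<in>UNIV. ((if i = j then 1 else 0) - c * w $ i * w $ j) * x $ j)
      = x $ i - c * (w \<bullet> x) * w $ i" for i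
  proof -
    have "(\<Sum>j\<in>UNIV. ((if i = j then 1 else 0) - c * w $ i * w $ j) * x $ j)
       = (\<Sum>j\<in>UNIV. (if i = j then x $ j else 0) - c * w $ i * (w $ j * x $ j))"
      by (rule sum.cong) (auto simp: algebra_simps)
    also have "\<dots> = x $ i - c * w $ i * (\<Sum>j\<in>UNIV. w $ j * x $ j)"
      by (simp add: sum_subtractf sum_distrib_left)
    also have "\<dots> = x $ i - c * (w \<bullet> x) * w $ i"
      by (simp add: inner_vec_def mult_ac)
    finally show ?thesis .
  qed
  then show ?thesis
    by (simp add: vec_eq_iff matrix_vector_mult_def)
qed

lemma hh_mv: "hh e u *v x = x - (2 / ((e - u) \<bullet> (e - u)) * ((e - u) \<bullet> x)) *\<^sub>R (e - u)"
  unfolding hh_def by (rule mv_rank1)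

lemma hh_transpose: "transpose (hh e u) = hh e u"
proof -
  have "hh e u $ i $ j = hh e u $ j $ i" for i j
    unfolding hh_def vec_lambda_beta by (cases "i = j") (simp_all add: algebra_simps)
  then show ?thesis by (simp add: transpose_def vec_eq_iff)
qed

lemma refl_invol:
  fixes w x :: "real^'n"
  defines "r \<equiv> \<lambda>x. x - (2 / (w \<bullet> w) * (w \<bullet> x)) *\<^sub>R w"
  shows "r (r x) = x"
proof (cases "w = 0")
  case True then show ?thesis by (simp add: r_def)
next
  case False
  then have ww: "w \<bullet> w \<noteq> 0" by simp
  have "w \<bullet> r x = w \<bullet> x - (2 / (w \<bullet> w) * (w \<bullet> x)) * (w \<bullet> w)"
    by (simp add: r_def inner_diff_right)
  also have "\<dots> = - (w \<bullet> x)" using ww by simp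
  finally have "w \<bullet> r x = - (w \<bullet> x)" .
  then show ?thesis by (simp add: r_def algebra_simps)
qed

lemma hh_invol: "hh e u ** hh e u = mat 1"
proof -
  have "hh e u *v (hh e u *v x) = x" for x
    unfolding hh_mv using refl_invol[where w="e - u" and x=x] by simp
  then show ?thesis by (simp add: matrix_eq matrix_vector_mul_assoc)
qed

lemma hh_orth: "orthogonal_matrix (hh e u)"
  by (simp add: orthogonal_matrix_def hh_transpose hh_invol)

lemma hh_e:
  assumes "norm e = norm u" shows "hh e u *v e = u"
proof (cases "e = u")
  case True then show ?thesis by (simp add: hh_mv)
next
  case False
  have n: "e \<bullet> e = u \<bullet> u" using assms by (simp add: dot_square_norm)
  have ww: "(e - u) \<bullet> (e - u) = 2 * ((e - u) \<bullet> e)"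
    using n by (simp add: inner_diff_left inner_diff_right inner_commute)
  have "(e - u) \<bullet> (e - u) \<noteq> 0" using False by simp
  then have "(e - u) \<bullet> e \<noteq> 0" using ww by (metis mult_zero_right)
  then have c1: "2 / ((e - u) \<bullet> (e - u)) * ((e - u) \<bullet> e) = 1" unfolding ww by simp
  show ?thesis by (simp only: hh_mv c1) simp
qed

lemma hh_u:
  assumes "norm e = norm u" shows "hh e u *v u = e"
  by (metis assms hh_e hh_invol matrix_vector_mul_assoc matrix_vector_mul_lid)

lemma hh_fix:
  assumes "v \<bullet> e = 0" "v \<bullet> u = 0" shows "hh e u *v v = v"
proof -
  have "(e - u) \<bullet> v = 0" using assms by (simp add: inner_diff_left inner_diff_right inner_commute)
  then show ?thesis by (simp add: hh_mv)
qed

lemma hh_of: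
  assumes "e \<in> orthogonal_comp V" "u \<in> orthogonal_comp V"
  shows "hh e u \<in> orth_fix V"
  using assms hh_orth
  by (auto simp: orth_fix_def orthogonal_comp_def orthogonal_def intro!: hh_fix)

lemma hh_alt: "hh (e::real^'n) u = mat 1 - (2 / ((e - u) \<bullet> (e - u))) *\<^sub>R (\<chi> i j. (e - u) $ i * (e - u) $ j)"
  by (simp add: hh_def vec_eq_iff mat_def mult.assoc)

lemma hh_meas[measurable]: "(\<lambda>u. hh (e::real^'n) u) \<in> borel_measurable borel"
proof -
  have c1: "(\<lambda>u. 2 / ((e - u) \<bullet> (e - u))) \<in> borel_measurable (borel :: (real^'n) measure)"
    by (intro borel_measurable_divide borel_measurable_const borel_measurable_continuous_onI continuous_intros)
  have c2: "(\<lambda>u. \<chi> i j. (e - u) $ i * (e - u) $ j) \<in> borel_measurable (borel :: (real^'n) measure)"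
    by (intro borel_measurable_continuous_onI continuous_intros)
  show ?thesis unfolding hh_alt
    by (intro borel_measurable_diff borel_measurable_const borel_measurable_scaleR c1 c2)
qed



section \<open>Generic measure lemmas\<close>

lemma sets_pair_borel:
  fixes \<mu> :: "('a::second_countable_topology) measure" and \<nu> :: "('b::second_countable_topology) measure"
  assumes "sets \<mu> = sets borel" "sets \<nu> = sets borel"
  shows "sets (\<mu> \<Otimes>\<^sub>M \<nu>) = sets borel"
  using sets_pair_measure_cong[OF assms] unfolding borel_prod .

lemma space_borel_eq: "sets \<mu> = sets borel \<Longrightarrow> space \<mu> = UNIV"
  by (metis sets_eq_imp_space_eq space_borel)

lemma meas_pair:
  fixes \<mu> :: "('a::second_countable_topology) measure" and \<nu> :: "('b::second_countable_topology) measure"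
    and f :: "'a \<times> 'b \<Rightarrow> 'c::topological_space"
  assumes "sets \<mu> = sets borel" "sets \<nu> = sets borel" "f \<in> borel_measurable (borel \<Otimes>\<^sub>M borel)"
  shows "f \<in> borel_measurable (\<mu> \<Otimes>\<^sub>M \<nu>)"
proof -
  have "measurable (\<mu> \<Otimes>\<^sub>M \<nu>) (borel :: 'c measure) = measurable (borel \<Otimes>\<^sub>M borel) borel"
    by (rule measurable_cong_sets[OF sets_pair_measure_cong[OF assms(1,2)] refl])
  then show ?thesis using assms(3) by simp
qed

lemma meas_sets:
  fixes f :: "'a::topological_space \<Rightarrow> 'c::topological_space"
  assumes "sets \<mu> = sets borel" "f \<in> borel_measurable borel"
  shows "f \<in> borel_measurable \<mu>"
proof -
  have "measurable \<mu> (borel :: 'c measure) = measurable borel borel"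
    by (rule measurable_cong_sets[OF assms(1) refl])
  then show ?thesis using assms(2) by simp
qed

lemma borel_measurable_mmult[measurable (raw)]:
  fixes f g :: "'a \<Rightarrow> real^'n^'n"
  assumes "f \<in> borel_measurable M" "g \<in> borel_measurable M"
  shows "(\<lambda>x. f x ** g x) \<in> borel_measurable M"
  by (rule borel_measurable_continuous_Pair[OF assms]) (intro continuous_intros)

lemma borel_measurable_mvmult[measurable (raw)]:
  fixes f :: "'a \<Rightarrow> real^'n^'n" and g :: "'a \<Rightarrow> real^'n"
  assumes "f \<in> borel_measurable M" "g \<in> borel_measurable M"
  shows "(\<lambda>x. f x *v g x) \<in> borel_measurable M"
  by (rule borel_measurable_continuous_Pair[OF assms]) (intro continuous_intros)

lemma borel_measurable_transpose[measurable (raw)]: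
  fixes f :: "'a \<Rightarrow> real^'n^'n"
  assumes "f \<in> borel_measurable M"
  shows "(\<lambda>x. transpose (f x)) \<in> borel_measurable M"
proof -
  have "(transpose :: real^'n^'n \<Rightarrow> _) \<in> borel_measurable borel"
    by (intro borel_measurable_continuous_onI continuous_intros continuous_on_id)
  from measurable_compose[OF assms this] show ?thesis by (simp add: o_def)
qed

lemma emeasure_distr_pair:
  fixes \<mu> :: "('a::second_countable_topology) measure" and \<nu> :: "('b::second_countable_topology) measure"
    and F :: "'a \<times> 'b \<Rightarrow> 'c::topological_space"
  assumes s: "sets \<mu> = sets borel" "sets \<nu> = sets borel"
    and p: "prob_space \<mu>" "prob_space \<nu>"
    and F: "F \<in> borel_measurable (\<mu> \<Otimes>\<^sub>M \<nu>)" and X: "X \<in> sets borel"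
  shows "emeasure (distr (\<mu> \<Otimes>\<^sub>M \<nu>) borel F) X = (\<integral>\<^sup>+a. emeasure \<nu> {b. F (a, b) \<in> X} \<partial>\<mu>)"
    and "emeasure (distr (\<mu> \<Otimes>\<^sub>M \<nu>) borel F) X = (\<integral>\<^sup>+b. emeasure \<mu> {a. F (a, b) \<in> X} \<partial>\<nu>)"
proof -
  interpret pair_prob_space \<mu> \<nu> using p by (simp add: pair_prob_space.intro pair_sigma_finite_def prob_space_imp_sigma_finite)
  have sp: "space (\<mu> \<Otimes>\<^sub>M \<nu>) = UNIV" using space_borel_eq[OF s(1)] space_borel_eq[OF s(2)] by (simp add: space_pair_measure)
  have Q: "F -` X \<in> sets (\<mu> \<Otimes>\<^sub>M \<nu>)" using measurable_sets[OF F X] sp by simp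
  have "emeasure (distr (\<mu> \<Otimes>\<^sub>M \<nu>) borel F) X = emeasure (\<mu> \<Otimes>\<^sub>M \<nu>) (F -` X)"
    using F X sp by (simp add: emeasure_distr)
  also have "\<dots> = (\<integral>\<^sup>+a. emeasure \<nu> (Pair a -` (F -` X)) \<partial>\<mu>)"
    by (rule M2.emeasure_pair_measure_alt[OF Q])
  finally show "emeasure (distr (\<mu> \<Otimes>\<^sub>M \<nu>) borel F) X = (\<integral>\<^sup>+a. emeasure \<nu> {b. F (a, b) \<in> X} \<partial>\<mu>)"
    by (simp add: vimage_def)
  have "emeasure (distr (\<mu> \<Otimes>\<^sub>M \<nu>) borel F) X = emeasure (\<mu> \<Otimes>\<^sub>M \<nu>) (F -` X)"
    using F X sp by (simp add: emeasure_distr)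
  also have "\<dots> = (\<integral>\<^sup>+b. emeasure \<mu> ((\<lambda>a. (a, b)) -` (F -` X)) \<partial>\<nu>)"
    by (rule emeasure_pair_measure_alt2[OF Q])
  finally show "emeasure (distr (\<mu> \<Otimes>\<^sub>M \<nu>) borel F) X = (\<integral>\<^sup>+b. emeasure \<mu> {a. F (a, b) \<in> X} \<partial>\<nu>)"
    by (simp add: vimage_def)
qed

lemma emeasure_section_meas:
  fixes \<mu> :: "('a::second_countable_topology) measure" and \<nu> :: "('b::second_countable_topology) measure"
    and F :: "'a \<times> 'b \<Rightarrow> 'c::topological_space"
  assumes s: "sets \<mu> = sets borel" "sets \<nu> = sets borel"
    and p: "prob_space \<nu>"
    and F: "F \<in> borel_measurable (borel \<Otimes>\<^sub>M borel)" and X: "X \<in> sets borel"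
  shows "(\<lambda>a. emeasure \<nu> {b. F (a, b) \<in> X}) \<in> borel_measurable borel"
proof -
  interpret sigma_finite_measure \<nu> using p by (simp add: prob_space_imp_sigma_finite)
  have "measurable ((borel :: 'a measure) \<Otimes>\<^sub>M \<nu>) (borel :: 'c measure) = measurable ((borel :: 'a measure) \<Otimes>\<^sub>M (borel :: 'b measure)) borel"
    by (rule measurable_cong_sets[OF sets_pair_measure_cong[OF refl s(2)] refl])
  then have F': "F \<in> borel_measurable (borel \<Otimes>\<^sub>M \<nu>)" using F by simp
  have sp: "space ((borel :: 'a measure) \<Otimes>\<^sub>M \<nu>) = UNIV" using space_borel_eq[OF s(2)] by (simp add: space_pair_measure)
  have Q: "F -` X \<in> sets (borel \<Otimes>\<^sub>M \<nu>)" using measurable_sets[OF F' X] sp by simp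
  from measurable_emeasure_Pair[OF Q] show ?thesis by (simp add: vimage_def)
qed

lemma AE_of_emeasure_1:
  assumes "prob_space \<mu>" "A \<in> sets \<mu>" "emeasure \<mu> A = 1"
  shows "AE x in \<mu>. x \<in> A"
proof -
  interpret prob_space \<mu> by fact
  show ?thesis using assms(2,3) AE_in_set_eq_1[OF assms(2)] by (simp add: emeasure_eq_measure)
qed

section \<open>Uniform measure on the unit ball\<close>

definition gam :: "(real^'n) measure" where "gam = uniform_measure lborel (ball 0 1)"

lemma sets_gam[measurable_cong]: "sets gam = sets borel"
  by (simp add: gam_def)

lemma ball_pos: "emeasure lborel (ball (0::real^'n) 1) \<noteq> 0"
proof -
  have "measure lborel (ball (0::real^'n) 1) > 0" by (rule content_ball_pos) simp
  show ?thesis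
  proof
    assume "emeasure lborel (ball (0::real^'n) 1) = 0"
    then have "measure lborel (ball (0::real^'n) 1) = 0" by (simp add: measure_def)
    with \<open>measure lborel (ball (0::real^'n) 1) > 0\<close> show False by simp
  qed
qed

lemma prob_gam: "prob_space (gam :: (real^'n) measure)"
  unfolding gam_def
proof (rule prob_space_uniform_measure)
  show "emeasure lborel (ball (0::real^'n) 1) \<noteq> 0" by (rule ball_pos)
  show "emeasure lborel (ball (0::real^'n) 1) \<noteq> \<infinity>"
    using emeasure_lborel_ball_finite[of "0::real^'n" 1] by simp
qed

lemma gam_emeasure:
  assumes "B \<in> sets borel"
  shows "emeasure (gam :: (real^'n) measure) B = emeasure lborel (ball 0 1 \<inter> B) / emeasure lborel (ball (0::real^'n) 1)"
  unfolding gam_def using assms by (subst emeasure_uniform_measure) auto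

lemma gam_orth:
  fixes S :: "real^'n^'n"
  assumes S: "orthogonal_matrix S"
  shows "distr gam borel ((*v) S) = gam"
proof (rule measure_eqI)
  show "sets (distr gam borel ((*v) S)) = sets gam" by (simp add: sets_gam)
  fix A assume "A \<in> sets (distr gam borel ((*v) S))"
  then have A: "A \<in> sets borel" by simp
  have m: "(*v) S \<in> borel_measurable borel"
    by (rule linear_borel_measurable) simp
  have mg: "(*v) S \<in> borel_measurable gam" by (rule meas_sets[OF sets_gam m])
  have b: "(*v) S -` ball 0 1 = ball 0 1" using orth_norm[OF S] by auto
  have "emeasure (distr gam borel ((*v) S)) A = emeasure gam ((*v) S -` A)"
    using mg A by (simp add: emeasure_distr space_borel_eq[OF sets_gam])
  also have "\<dots> = emeasure lborel (ball 0 1 \<inter> (*v) S -` A) / emeasure lborel (ball (0::real^'n) 1)"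
    using measurable_sets[OF m A] by (simp add: gam_emeasure)
  also have "ball 0 1 \<inter> (*v) S -` A = (*v) S -` (ball 0 1 \<inter> A)" using b by auto
  also have "emeasure lborel ((*v) S -` (ball 0 1 \<inter> A)) = emeasure (distr lborel borel ((*v) S)) (ball 0 1 \<inter> A)"
    using m A by (subst emeasure_distr) auto
  also have "\<dots> = emeasure lborel (ball 0 1 \<inter> A)" by (simp add: lborel_orth[OF S])
  also have "emeasure lborel (ball 0 1 \<inter> A) / emeasure lborel (ball (0::real^'n) 1) = emeasure gam A"
    using A by (simp add: gam_emeasure)
  finally show "emeasure (distr gam borel ((*v) S)) A = emeasure gam A" .
qed

lemma gam_null:
  fixes W :: "(real^'n) set"
  assumes W: "subspace W" "dim W < CARD('n)"
  shows "emeasure gam W = 0"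
proof -
  have "negligible W" by (rule negligible_lowdim) (use W in simp)
  then have n: "W \<in> null_sets lebesgue" by (simp add: negligible_iff_null_sets)
  have c: "W \<in> sets borel" using closed_subspace[OF W(1)] by (simp add: borel_closed)
  have cW: "W \<in> sets lborel" using c by simp
  have "W \<in> null_sets lborel" using n null_sets_completion_iff[OF cW] by blast
  then have "emeasure lborel W = 0" by (rule null_setsD1)
  then have "emeasure lborel (ball 0 1 \<inter> W) = 0"
    by (rule emeasure_eq_0[OF cW]) auto
  then show ?thesis unfolding gam_def using c by (subst emeasure_uniform_measure) auto
qed

section \<open>A measure on the unit sphere of the orthogonal complement\<close>

definition sph :: "(real^'n) set \<Rightarrow> (real^'n) measure" where
  "sph V = distr gam borel (\<lambda>g. sgn (g - orth_proj V g))"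

lemma sph_meas:
  fixes V :: "(real^'n) set"
  assumes V: "subspace V"
  shows "(\<lambda>g. sgn (g - orth_proj V g)) \<in> borel_measurable borel"
proof -
  have "(\<lambda>g. g - orth_proj V g) \<in> borel_measurable borel"
    using orth_proj_meas[OF V] by measurable
  then show ?thesis by measurable
qed

lemma sets_sph: "sets (sph V) = sets borel" by (simp add: sph_def)

lemma prob_sph:
  fixes V :: "(real^'n) set"
  assumes V: "subspace V" shows "prob_space (sph V)"
  unfolding sph_def
  by (rule prob_space.prob_space_distr[OF prob_gam meas_sets[OF sets_gam sph_meas[OF V]]])

lemma sgn_orth:
  fixes S :: "real^'n^'n"
  assumes "orthogonal_matrix S" shows "S *v sgn x = sgn (S *v x)"
  using orth_norm[OF assms, of x] by (simp add: sgn_div_norm matrix_vector_mult_scaleR)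

lemma sph_sphere:
  fixes V :: "(real^'n) set"
  assumes V: "subspace V" "dim V < CARD('n)"
  shows "emeasure (sph V) (orthogonal_comp V \<inter> sphere 0 1) = 1"
proof -
  interpret prob_space "sph V" by (rule prob_sph[OF V(1)])
  interpret G: prob_space "gam :: (real^'n) measure" by (rule prob_gam)
  have Vb: "V \<in> sets borel" using closed_subspace[OF V(1)] by (simp add: borel_closed)
  have Cb: "orthogonal_comp V \<inter> sphere 0 1 \<in> sets borel"
    using closed_subspace[OF subspace_orthogonal_comp] by (intro sets.Int borel_closed) auto
  have sub: "UNIV - V \<subseteq> (\<lambda>g. sgn (g - orth_proj V g)) -` (orthogonal_comp V \<inter> sphere 0 1)"
  proof
    fix g assume "g \<in> UNIV - V"
    then have g: "g \<notin> V" by simp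
    have ne: "g - orth_proj V g \<noteq> 0" using g orth_proj(1)[OF V(1), of g] by (metis eq_iff_diff_eq_0)
    have "sgn (g - orth_proj V g) \<in> orthogonal_comp V"
      unfolding sgn_div_norm using orth_proj(2)[OF V(1)]
      by (intro subspace_scale[OF subspace_orthogonal_comp]) auto
    then show "g \<in> (\<lambda>g. sgn (g - orth_proj V g)) -` (orthogonal_comp V \<inter> sphere 0 1)"
      using ne by (simp add: norm_sgn)
  qed
  have sp1: "emeasure (gam::(real^'n) measure) UNIV = 1"
    using G.emeasure_space_1 by (simp add: space_borel_eq[OF sets_gam])
  have e1: "emeasure gam (UNIV - V) = 1"
    using emeasure_compl[of V gam] Vb gam_null[OF V] by (simp add: space_borel_eq[OF sets_gam] sets_gam sp1)
  have pm: "(\<lambda>g. sgn (g - orth_proj V g)) -` (orthogonal_comp V \<inter> sphere 0 1) \<in> sets borel"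
    using measurable_sets[OF sph_meas[OF V(1)] Cb] by simp
  have "emeasure gam (UNIV - V) \<le> emeasure gam ((\<lambda>g. sgn (g - orth_proj V g)) -` (orthogonal_comp V \<inter> sphere 0 1))"
    using sub pm by (intro emeasure_mono) (auto simp: sets_gam)
  also have "\<dots> = emeasure (sph V) (orthogonal_comp V \<inter> sphere 0 1)"
    unfolding sph_def using Cb meas_sets[OF sets_gam sph_meas[OF V(1)]]
    by (subst emeasure_distr) (auto simp: space_borel_eq[OF sets_gam])
  finally have "1 \<le> emeasure (sph V) (orthogonal_comp V \<inter> sphere 0 1)" using e1 by simp
  moreover have "emeasure (sph V) (orthogonal_comp V \<inter> sphere 0 1) \<le> 1" by (rule emeasure_le_1)
  ultimately show ?thesis by (rule antisym[rotated])
qed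

lemma sph_inv:
  fixes V :: "(real^'n) set"
  assumes V: "subspace V" and S: "S \<in> orth_fix V"
  shows "distr (sph V) borel ((*v) S) = sph V"
proof -
  have m: "(*v) S \<in> borel_measurable borel" by (rule linear_borel_measurable) simp
  have eq: "(*v) S \<circ> (\<lambda>g. sgn (g - orth_proj V g)) = (\<lambda>g. sgn (g - orth_proj V g)) \<circ> (*v) S"
  proof
    fix g
    have "S *v sgn (g - orth_proj V g) = sgn (S *v (g - orth_proj V g))"
      by (rule sgn_orth[OF of_orth[OF S]])
    also have "S *v (g - orth_proj V g) = S *v g - orth_proj V (S *v g)"
      using of_fix[OF S orth_proj(1)[OF V]] of_proj[OF V S] by (simp add: matrix_vector_mult_diff_distrib)
    finally show "((*v) S \<circ> (\<lambda>g. sgn (g - orth_proj V g))) g = ((\<lambda>g. sgn (g - orth_proj V g)) \<circ> (*v) S) g"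
      by simp
  qed
  have "distr (sph V) borel ((*v) S) = distr gam borel ((*v) S \<circ> (\<lambda>g. sgn (g - orth_proj V g)))"
    unfolding sph_def using meas_sets[OF sets_gam sph_meas[OF V]] m by (subst distr_distr) auto
  also have "\<dots> = distr gam borel ((\<lambda>g. sgn (g - orth_proj V g)) \<circ> (*v) S)" by (simp add: eq)
  also have "\<dots> = distr (distr gam borel ((*v) S)) borel (\<lambda>g. sgn (g - orth_proj V g))"
    using meas_sets[OF sets_gam m] sph_meas[OF V] by (subst distr_distr) auto
  also have "\<dots> = sph V" by (simp add: gam_orth[OF of_orth[OF S]] sph_def)
  finally show ?thesis .
qed



definition haar :: "(real^'n) set \<Rightarrow> (real^'n^'n) measure \<Rightarrow> bool" where
  "haar V \<mu> \<longleftrightarrow> sets \<mu> = sets borel \<and> prob_space \<mu> \<and> emeasure \<mu> (orth_fix V) = 1 \<and>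
       (\<forall>S\<in>orth_fix V. distr \<mu> borel (\<lambda>T. S ** T) = \<mu>)"

lemma Haar_fix_eq: "Haar_fix V = The (haar V)"
  unfolding Haar_fix_def by (rule arg_cong[where f=The]) (simp add: haar_def fun_eq_iff)

lemma haar_UNIV: "haar UNIV (return borel (mat 1 :: real^'n^'n))"
proof -
  have m: "(\<lambda>T. S ** T) \<in> borel_measurable (borel :: (real^'n^'n) measure)" for S :: "real^'n^'n"
    by measurable
  show ?thesis
    unfolding haar_def of_UNIV
    by (auto simp: prob_space_return distr_return[OF m] matrix_mul_lid)
qed

lemma subspace_fixed:
  fixes R :: "real^'n^'n"
  shows "subspace {v. R *v v = v}"
  by (auto simp: subspace_def matrix_vector_right_distrib matrix_vector_mult_scaleR)

lemma V_sub_span: "V \<subseteq> span (insert e V)"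
  by (meson span_superset subset_insertI subset_trans)

lemma haar_step:
  fixes V :: "(real^'n) set"
  assumes V: "subspace V" "dim V < CARD('n)" and e: "e \<in> orthogonal_comp V" "norm e = 1"
    and H: "haar (span (insert e V)) \<mu>'"
  shows "haar V (distr (sph V \<Otimes>\<^sub>M \<mu>') borel (\<lambda>x. hh e (fst x) ** snd x))"
proof -
  let ?\<sigma> = "sph V" and ?G = "orth_fix V" and ?G' = "orth_fix (span (insert e V))"
  let ?F = "\<lambda>x. hh e (fst x) ** snd x"
  let ?C = "orthogonal_comp V \<inter> sphere 0 1"
  have s\<sigma>: "sets ?\<sigma> = sets borel" by (rule sets_sph)
  have p\<sigma>: "prob_space ?\<sigma>" by (rule prob_sph[OF V(1)])
  have s\<mu>: "sets \<mu>' = sets borel" and p\<mu>: "prob_space \<mu>'" and g\<mu>: "emeasure \<mu>' ?G' = 1"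
    and i\<mu>: "\<And>S. S \<in> ?G' \<Longrightarrow> distr \<mu>' borel (\<lambda>T. S ** T) = \<mu>'"
    using H by (auto simp: haar_def)
  have m1: "(\<lambda>x. hh e (fst x)) \<in> borel_measurable ((borel :: (real^'n) measure) \<Otimes>\<^sub>M (borel :: (real^'n^'n) measure))"
    using measurable_compose[OF measurable_fst hh_meas] by (simp add: o_def)
  have m2: "(\<lambda>x. snd x) \<in> borel_measurable ((borel :: (real^'n) measure) \<Otimes>\<^sub>M (borel :: (real^'n^'n) measure))"
    by (rule measurable_snd)
  have mF0: "?F \<in> borel_measurable ((borel :: (real^'n) measure) \<Otimes>\<^sub>M (borel :: (real^'n^'n) measure))"
    by (rule borel_measurable_mmult[OF m1 m2])
  have mF: "?F \<in> borel_measurable (?\<sigma> \<Otimes>\<^sub>M \<mu>')" by (rule meas_pair[OF s\<sigma> s\<mu> mF0])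
  have pp: "prob_space (?\<sigma> \<Otimes>\<^sub>M \<mu>')" by (rule prob_space_pair[OF p\<sigma> p\<mu>])
  interpret PP: prob_space "?\<sigma> \<Otimes>\<^sub>M \<mu>'" by (rule pp)
  interpret M2: prob_space \<mu>' by (rule p\<mu>)
  have spp: "space (?\<sigma> \<Otimes>\<^sub>M \<mu>') = UNIV"
    using space_borel_eq[OF s\<sigma>] space_borel_eq[OF s\<mu>] by (simp add: space_pair_measure)
  define \<mu> where "\<mu> = distr (?\<sigma> \<Otimes>\<^sub>M \<mu>') borel ?F"
  have s: "sets \<mu> = sets borel" by (simp add: \<mu>_def)
  have p: "prob_space \<mu>" unfolding \<mu>_def by (rule PP.prob_space_distr[OF mF])
  have C: "?C \<in> sets borel"
    using closed_subspace[OF subspace_orthogonal_comp] by (intro sets.Int borel_closed) auto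
  have Gsub: "?G' \<subseteq> ?G" by (rule of_anti[OF V_sub_span])
  \<comment> \<open>mass on the group\<close>
  have g: "emeasure \<mu> ?G = 1"
  proof -
    have sub: "?C \<times> ?G' \<subseteq> ?F -` ?G"
    proof
      fix x assume "x \<in> ?C \<times> ?G'"
      then have "hh e (fst x) \<in> ?G" "snd x \<in> ?G" using hh_of[OF e(1)] Gsub by auto
      then show "x \<in> ?F -` ?G" by (simp add: of_mult)
    qed
    have "emeasure (?\<sigma> \<Otimes>\<^sub>M \<mu>') (?C \<times> ?G') = emeasure ?\<sigma> ?C * emeasure \<mu>' ?G'"
      using C s\<sigma> s\<mu> by (intro M2.emeasure_pair_measure_Times) auto
    also have "\<dots> = 1" using sph_sphere[OF V] g\<mu> by simp
    moreover have "emeasure (?\<sigma> \<Otimes>\<^sub>M \<mu>') (?C \<times> ?G') \<le> emeasure (?\<sigma> \<Otimes>\<^sub>M \<mu>') (?F -` ?G)"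
      by (rule emeasure_mono[OF sub]) (use measurable_sets[OF mF of_borel] spp in simp)
    ultimately have "1 \<le> emeasure (?\<sigma> \<Otimes>\<^sub>M \<mu>') (?F -` ?G)" by simp
    also have "\<dots> = emeasure \<mu> ?G"
      unfolding \<mu>_def using mF spp by (simp add: emeasure_distr)
    finally have "1 \<le> emeasure \<mu> ?G" .
    moreover have "emeasure \<mu> ?G \<le> 1" using prob_space.emeasure_le_1[OF p] .
    ultimately show ?thesis by (rule antisym[rotated])
  qed
  \<comment> \<open>emeasure formula\<close>
  have form: "emeasure \<mu> X = (\<integral>\<^sup>+u. emeasure \<mu>' {T. hh e u ** T \<in> X} \<partial>?\<sigma>)" if X: "X \<in> sets borel" for X
    unfolding \<mu>_def using emeasure_distr_pair(1)[OF s\<sigma> s\<mu> p\<sigma> p\<mu> mF X] by simp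
  have inv: "distr \<mu> borel (\<lambda>T. S ** T) = \<mu>" if S: "S \<in> ?G" for S
  proof (rule measure_eqI)
    show "sets (distr \<mu> borel ((**) S)) = sets \<mu>" by (simp add: s)
    fix A assume "A \<in> sets (distr \<mu> borel ((**) S))"
    then have A: "A \<in> sets borel" by simp
    have mS: "(\<lambda>T. S ** T) \<in> borel_measurable (borel :: (real^'n^'n) measure)" by measurable
    have mS': "(\<lambda>T. S ** T) \<in> borel_measurable \<mu>" by (rule meas_sets[OF s mS])
    define \<Psi> where "\<Psi> v = emeasure \<mu>' {T. hh e v ** T \<in> A}" for v
    have m\<Psi>: "\<Psi> \<in> borel_measurable borel"
      unfolding \<Psi>_def using emeasure_section_meas[OF s\<sigma> s\<mu> p\<mu> mF0 A] by simp
    have AEC: "AE u in ?\<sigma>. u \<in> ?C"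
      by (rule AE_of_emeasure_1[OF p\<sigma> _ sph_sphere[OF V]]) (use C s\<sigma> in simp)
    have key: "emeasure \<mu>' {T. S ** (hh e u ** T) \<in> A} = \<Psi> (S *v u)" if u: "u \<in> ?C" for u
    proof -
      define u' where "u' = S *v u"
      have uV: "u \<in> orthogonal_comp V" and nu: "norm u = 1" using u by auto
      have u'V: "u' \<in> orthogonal_comp V" unfolding u'_def by (rule of_perp[OF S uV])
      have nu': "norm u' = 1" unfolding u'_def using orth_norm[OF of_orth[OF S]] nu by simp
      define R where "R = hh e u' ** S ** hh e u"
      have Ro: "orthogonal_matrix R" unfolding R_def
        by (intro orthogonal_matrix_mul hh_orth of_orth[OF S])
      have Rv: "R *v v = v" if "v \<in> insert e V" for v
      proof -
        have Rv': "R *v v = hh e u' *v (S *v (hh e u *v v))"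
          by (simp add: R_def matrix_vector_mul_assoc matrix_mul_assoc)
        show ?thesis
        proof (cases "v = e")
          case True
          have "hh e u *v e = u" using e(2) nu by (intro hh_e) simp
          moreover have "hh e u' *v u' = e" using e(2) nu' by (intro hh_u) simp
          ultimately show ?thesis using True Rv' by (simp add: u'_def)
        next
          case False
          then have v: "v \<in> V" using that by simp
          show ?thesis using Rv' of_fix[OF hh_of[OF e(1) uV] v] of_fix[OF S v] of_fix[OF hh_of[OF e(1) u'V] v]
            by simp
        qed
      qed
      have "span (insert e V) \<subseteq> {v. R *v v = v}"
        using Rv by (intro span_minimal subspace_fixed) auto
      then have RG: "R \<in> ?G'" using Ro by (auto simp: orth_fix_def)
      have eq: "S ** (hh e u ** T) = hh e u' ** (R ** T)" for T
      proof -
        have "hh e u' ** (R ** T) = (hh e u' ** hh e u') ** (S ** (hh e u ** T))"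
          by (simp add: R_def matrix_mul_assoc)
        also have "\<dots> = S ** (hh e u ** T)" by (simp add: hh_invol matrix_mul_lid)
        finally show ?thesis by simp
      qed
      have mh: "(\<lambda>T. hh e u' ** T) \<in> borel_measurable (borel :: (real^'n^'n) measure)" by measurable
      have B: "{T. hh e u' ** T \<in> A} \<in> sets borel"
        using measurable_sets_borel[OF mh A] by (simp add: vimage_def)
      have mR: "(\<lambda>T. R ** T) \<in> borel_measurable \<mu>'"
        by (rule meas_sets[OF s\<mu>]) measurable
      have "{T. S ** (hh e u ** T) \<in> A} = (\<lambda>T. R ** T) -` {T. hh e u' ** T \<in> A}"
        by (auto simp: eq)
      then have "emeasure \<mu>' {T. S ** (hh e u ** T) \<in> A} = emeasure (distr \<mu>' borel (\<lambda>T. R ** T)) {T. hh e u' ** T \<in> A}"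
        using mR B by (simp add: emeasure_distr space_borel_eq[OF s\<mu>])
      also have "\<dots> = \<Psi> u'" by (simp add: i\<mu>[OF RG] \<Psi>_def)
      finally show ?thesis by (simp add: u'_def)
    qed
    have ae: "AE u in ?\<sigma>. emeasure \<mu>' {T. S ** (hh e u ** T) \<in> A} = \<Psi> (S *v u)"
      using AEC by eventually_elim (rule key)
    have "emeasure (distr \<mu> borel ((**) S)) A = emeasure \<mu> ((\<lambda>T. S ** T) -` A)"
      using mS' A by (simp add: emeasure_distr space_borel_eq[OF s])
    also have "\<dots> = (\<integral>\<^sup>+u. emeasure \<mu>' {T. hh e u ** T \<in> (\<lambda>T. S ** T) -` A} \<partial>?\<sigma>)"
      by (rule form[OF measurable_sets_borel[OF mS A]])
    also have "\<dots> = (\<integral>\<^sup>+u. \<Psi> (S *v u) \<partial>?\<sigma>)"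
      using ae by (intro nn_integral_cong_AE) (simp add: vimage_def)
    also have "\<dots> = (\<integral>\<^sup>+v. \<Psi> v \<partial>(distr ?\<sigma> borel ((*v) S)))"
    proof (rule nn_integral_distr[symmetric])
      show "(*v) S \<in> ?\<sigma> \<rightarrow>\<^sub>M borel"
        by (rule meas_sets[OF s\<sigma>]) (rule linear_borel_measurable, simp)
      show "\<Psi> \<in> borel_measurable (distr ?\<sigma> borel ((*v) S))"
        by (rule meas_sets[OF _ m\<Psi>]) simp
    qed
    also have "\<dots> = (\<integral>\<^sup>+v. \<Psi> v \<partial>?\<sigma>)" by (simp add: sph_inv[OF V(1) S])
    also have "\<dots> = emeasure \<mu> A" unfolding \<Psi>_def by (rule form[OF A, symmetric])
    finally show "emeasure (distr \<mu> borel ((**) S)) A = emeasure \<mu> A" .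
  qed
  show ?thesis unfolding haar_def \<mu>_def[symmetric] using s p g inv by blast
qed



lemma haar_ex:
  fixes V :: "(real^'n) set"
  assumes "subspace V"
  shows "\<exists>\<mu>. haar V \<mu>"
  using assms
proof (induction "CARD('n) - dim V" arbitrary: V rule: less_induct)
  case less
  show ?case
  proof (cases "V = UNIV")
    case True then show ?thesis using haar_UNIV by blast
  next
    case False
    then obtain x where x: "x \<notin> V" by auto
    define b where "b = x - orth_proj V x"
    have bV: "b \<in> orthogonal_comp V" unfolding b_def by (rule orth_proj(2)[OF less.prems])
    have b0: "b \<noteq> 0" unfolding b_def using x orth_proj(1)[OF less.prems, of x] by (metis eq_iff_diff_eq_0)
    define e where "e = sgn b"
    have eV: "e \<in> orthogonal_comp V" unfolding e_def sgn_div_norm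
      by (rule subspace_scale[OF subspace_orthogonal_comp bV])
    have ne: "norm e = 1" unfolding e_def using b0 by (simp add: norm_sgn)
    have enV: "e \<notin> span V"
    proof
      assume "e \<in> span V"
      then have "e \<in> V" using less.prems by (metis span_eq_iff)
      then have "e \<in> V \<inter> orthogonal_comp V" using eV by simp
      then have "e = 0" using orthogonal_Int_0[OF less.prems] by blast
      then show False using ne by simp
    qed
    have dimI: "dim (span (insert e V)) = dim V + 1" using enV by (simp add: dim_insert)
    have "dim (span (insert e V)) \<le> CARD('n)" by (rule dim_subset_UNIV_cart)
    then have dV: "dim V < CARD('n)" using dimI by simp
    have "CARD('n) - dim (span (insert e V)) < CARD('n) - dim V" using dimI dV by simp
    then obtain \<mu>' where "haar (span (insert e V)) \<mu>'"
      using less.hyps[of "span (insert e V)"] subspace_span by blast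
    then show ?thesis using haar_step[OF less.prems dV eV ne] by blast
  qed
qed

lemma AE_haar:
  assumes "haar V \<eta>" shows "AE T in \<eta>. T \<in> orth_fix V"
  using assms by (intro AE_of_emeasure_1) (auto simp: haar_def)

lemma haar_transpose_right:
  fixes V :: "(real^'n) set"
  assumes H: "haar V \<mu>" and S: "S \<in> orth_fix V"
  shows "distr (distr \<mu> borel transpose) borel (\<lambda>T. T ** S) = distr \<mu> borel transpose"
proof -
  have s: "sets \<mu> = sets borel" using H by (simp add: haar_def)
  have mt: "(transpose :: real^'n^'n \<Rightarrow> _) \<in> borel_measurable borel"
    by (intro borel_measurable_continuous_onI continuous_intros continuous_on_id)
  have mS: "(\<lambda>T. T ** S) \<in> borel_measurable (borel :: (real^'n^'n) measure)" by measurable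
  have mS': "(\<lambda>T. transpose S ** T) \<in> borel_measurable (borel :: (real^'n^'n) measure)" by measurable
  have eq: "(\<lambda>T. T ** S) \<circ> transpose = transpose \<circ> (\<lambda>T. transpose S ** T)"
    by (auto simp: fun_eq_iff matrix_transpose_mul)
  have "distr (distr \<mu> borel transpose) borel (\<lambda>T. T ** S) = distr \<mu> borel ((\<lambda>T. T ** S) \<circ> transpose)"
    using meas_sets[OF s mt] mS by (subst distr_distr) auto
  also have "\<dots> = distr (distr \<mu> borel (\<lambda>T. transpose S ** T)) borel transpose"
    unfolding eq using meas_sets[OF s mS'] mt by (subst distr_distr) auto
  also have "distr \<mu> borel (\<lambda>T. transpose S ** T) = \<mu>"
    using H of_transpose[OF S] by (simp add: haar_def)
  finally show ?thesis .
qed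

lemma haar_unique_aux:
  fixes V :: "(real^'n) set"
  assumes H: "haar V \<mu>" and K: "haar V \<nu>"
  shows "\<nu> = distr \<mu> borel transpose"
proof -
  let ?G = "orth_fix V"
  define \<mu>t where "\<mu>t = distr \<mu> borel transpose"
  have s\<mu>: "sets \<mu> = sets borel" and p\<mu>: "prob_space \<mu>" and g\<mu>: "emeasure \<mu> ?G = 1"
    using H by (auto simp: haar_def)
  have s\<nu>: "sets \<nu> = sets borel" and p\<nu>: "prob_space \<nu>"
    and i\<nu>: "\<And>S. S \<in> ?G \<Longrightarrow> distr \<nu> borel (\<lambda>T. S ** T) = \<nu>"
    using K by (auto simp: haar_def)
  have mt: "(transpose :: real^'n^'n \<Rightarrow> _) \<in> borel_measurable borel"
    by (intro borel_measurable_continuous_onI continuous_intros continuous_on_id)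
  have st: "sets \<mu>t = sets borel" by (simp add: \<mu>t_def)
  have pt: "prob_space \<mu>t" unfolding \<mu>t_def by (rule prob_space.prob_space_distr[OF p\<mu> meas_sets[OF s\<mu> mt]])
  have tG: "transpose -` ?G = ?G"
    by (auto dest: of_transpose)
  have gt: "emeasure \<mu>t ?G = 1"
    unfolding \<mu>t_def using meas_sets[OF s\<mu> mt] g\<mu> tG
    by (simp add: emeasure_distr space_borel_eq[OF s\<mu>])
  have it: "\<And>S. S \<in> ?G \<Longrightarrow> distr \<mu>t borel (\<lambda>T. T ** S) = \<mu>t"
    unfolding \<mu>t_def by (rule haar_transpose_right[OF H])
  have AEt: "AE S in \<mu>t. S \<in> ?G" by (rule AE_of_emeasure_1[OF pt _ gt]) (simp add: st)
  have AE\<nu>: "AE T in \<nu>. T \<in> ?G" by (rule AE_haar[OF K])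
  have m1: "(\<lambda>x. fst x ** snd x) \<in> borel_measurable ((borel :: (real^'n^'n) measure) \<Otimes>\<^sub>M (borel :: (real^'n^'n) measure))"
    by (intro borel_measurable_mmult measurable_fst'' measurable_snd'' measurable_ident_sets refl)
  have mF: "(\<lambda>x. fst x ** snd x) \<in> borel_measurable (\<mu>t \<Otimes>\<^sub>M \<nu>)" by (rule meas_pair[OF st s\<nu> m1])
  show ?thesis
  proof (rule measure_eqI)
    show "sets \<nu> = sets (distr \<mu> borel transpose)" by (simp add: s\<nu>)
    fix A assume "A \<in> sets \<nu>"
    then have A: "A \<in> sets borel" using s\<nu> by simp
    have mA: "{T. S ** T \<in> A} \<in> sets borel" for S :: "real^'n^'n"
    proof -
      have "(\<lambda>T. S ** T) \<in> borel_measurable (borel :: (real^'n^'n) measure)" by measurable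
      from measurable_sets_borel[OF this A] show ?thesis by (simp add: vimage_def)
    qed
    have mA': "{S. S ** T \<in> A} \<in> sets borel" for T :: "real^'n^'n"
    proof -
      have "(\<lambda>S. S ** T) \<in> borel_measurable (borel :: (real^'n^'n) measure)" by measurable
      from measurable_sets_borel[OF this A] show ?thesis by (simp add: vimage_def)
    qed
    have "emeasure (distr (\<mu>t \<Otimes>\<^sub>M \<nu>) borel (\<lambda>x. fst x ** snd x)) A = (\<integral>\<^sup>+S. emeasure \<nu> {T. S ** T \<in> A} \<partial>\<mu>t)"
      using emeasure_distr_pair(1)[OF st s\<nu> pt p\<nu> mF A] by simp
    also have "\<dots> = (\<integral>\<^sup>+S. emeasure \<nu> A \<partial>\<mu>t)"
    proof (rule nn_integral_cong_AE)
      show "AE S in \<mu>t. emeasure \<nu> {T. S ** T \<in> A} = emeasure \<nu> A"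
        using AEt
      proof eventually_elim
        case (elim S)
        have m: "(\<lambda>T. S ** T) \<in> borel_measurable \<nu>" by (rule meas_sets[OF s\<nu>]) measurable
        have "emeasure \<nu> {T. S ** T \<in> A} = emeasure (distr \<nu> borel (\<lambda>T. S ** T)) A"
          using m A by (simp add: emeasure_distr space_borel_eq[OF s\<nu>] vimage_def)
        then show ?case using i\<nu>[OF elim] by simp
      qed
    qed
    also have "\<dots> = emeasure \<nu> A" using prob_space.emeasure_space_1[OF pt] by simp
    finally have e1: "emeasure (distr (\<mu>t \<Otimes>\<^sub>M \<nu>) borel (\<lambda>x. fst x ** snd x)) A = emeasure \<nu> A" .
    have "emeasure (distr (\<mu>t \<Otimes>\<^sub>M \<nu>) borel (\<lambda>x. fst x ** snd x)) A = (\<integral>\<^sup>+T. emeasure \<mu>t {S. S ** T \<in> A} \<partial>\<nu>)"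
      using emeasure_distr_pair(2)[OF st s\<nu> pt p\<nu> mF A] by simp
    also have "\<dots> = (\<integral>\<^sup>+T. emeasure \<mu>t A \<partial>\<nu>)"
    proof (rule nn_integral_cong_AE)
      show "AE T in \<nu>. emeasure \<mu>t {S. S ** T \<in> A} = emeasure \<mu>t A"
        using AE\<nu>
      proof eventually_elim
        case (elim T)
        have m: "(\<lambda>S. S ** T) \<in> borel_measurable \<mu>t" by (rule meas_sets[OF st]) measurable
        have "emeasure \<mu>t {S. S ** T \<in> A} = emeasure (distr \<mu>t borel (\<lambda>S. S ** T)) A"
          using m A by (simp add: emeasure_distr space_borel_eq[OF st] vimage_def)
        then show ?case using it[OF elim] by simp
      qed
    qed
    also have "\<dots> = emeasure \<mu>t A" using prob_space.emeasure_space_1[OF p\<nu>] by simp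
    finally show "emeasure \<nu> A = emeasure (distr \<mu> borel transpose) A" using e1 by (simp add: \<mu>t_def)
  qed
qed

lemma haar_unique:
  fixes V :: "(real^'n) set"
  assumes "haar V \<mu>" "haar V \<nu>" shows "\<nu> = \<mu>"
  using haar_unique_aux[OF assms(1) assms(2)] haar_unique_aux[OF assms(1) assms(1)] by simp

lemma Haar_fix_haar:
  fixes V :: "(real^'n) set"
  assumes "subspace V" shows "haar V (Haar_fix V)"
proof -
  obtain \<mu> where "haar V \<mu>" using haar_ex[OF assms] by blast
  then have "The (haar V) = \<mu>" by (intro the_equality) (auto intro: haar_unique)
  then show ?thesis using \<open>haar V \<mu>\<close> by (simp add: Haar_fix_eq)
qed

lemma haar_right:
  fixes V :: "(real^'n) set"
  assumes H: "haar V \<mu>" and S: "S \<in> orth_fix V"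
  shows "distr \<mu> borel (\<lambda>T. T ** S) = \<mu>"
  using haar_transpose_right[OF H S] haar_unique_aux[OF H H] by simp



lemma meas_mv_pair: "(\<lambda>x. fst x *v snd x) \<in> borel_measurable ((borel :: (real^'n^'n) measure) \<Otimes>\<^sub>M (borel :: (real^'n) measure))"
  by (intro borel_measurable_mvmult measurable_fst'' measurable_snd'' measurable_ident_sets refl)

lemma unif_sphere_eq:
  fixes V :: "(real^'n) set"
  assumes V: "subspace V" and H: "haar V \<eta>" and e: "e \<in> orthogonal_comp V" "norm e = 1"
  shows "unif_sphere (orthogonal_comp V) = distr \<eta> borel (\<lambda>T. T *v e)"
proof -
  let ?G = "orth_fix V" and ?C = "orthogonal_comp V \<inter> sphere 0 1"
  define \<rho> where "\<rho> x = distr \<eta> borel (\<lambda>T. T *v x)" for x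
  have s\<eta>: "sets \<eta> = sets borel" and p\<eta>: "prob_space \<eta>" and g\<eta>: "emeasure \<eta> ?G = 1"
    and i\<eta>: "\<And>S. S \<in> ?G \<Longrightarrow> distr \<eta> borel (\<lambda>T. S ** T) = \<eta>"
    using H by (auto simp: haar_def)
  have GG: "orth_fix (orthogonal_comp (orthogonal_comp V)) = ?G" using orthogonal_comp_self[OF V] by simp
  have mx: "(\<lambda>T. T *v x) \<in> borel_measurable (borel :: (real^'n^'n) measure)" for x :: "real^'n"
    by (rule borel_measurable_mvmult[OF measurable_ident_sets[OF refl] borel_measurable_const])
  have mx': "(\<lambda>T. T *v x) \<in> borel_measurable \<eta>" for x :: "real^'n" by (rule meas_sets[OF s\<eta> mx])
  have C: "?C \<in> sets borel"
    using closed_subspace[OF subspace_orthogonal_comp] by (intro sets.Int borel_closed) auto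
  have s\<rho>: "sets (\<rho> x) = sets borel" for x by (simp add: \<rho>_def)
  have p\<rho>: "prob_space (\<rho> x)" for x unfolding \<rho>_def by (rule prob_space.prob_space_distr[OF p\<eta> mx'])
  have \<rho>_eq: "\<rho> x = \<rho> e" if x: "x \<in> orthogonal_comp V" "norm x = 1" for x
  proof -
    define R where "R = hh e x"
    have RG: "R \<in> ?G" unfolding R_def by (rule hh_of[OF e(1) x(1)])
    have Re: "R *v e = x" unfolding R_def using e(2) x(2) by (intro hh_e) simp
    have mR: "(\<lambda>T. T ** R) \<in> borel_measurable (borel :: (real^'n^'n) measure)" by measurable
    have "\<rho> x = distr \<eta> borel ((\<lambda>T. T *v e) \<circ> (\<lambda>T. T ** R))"
      unfolding \<rho>_def using Re by (simp add: o_def matrix_vector_mul_assoc[symmetric])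
    also have "\<dots> = distr (distr \<eta> borel (\<lambda>T. T ** R)) borel (\<lambda>T. T *v e)"
      using meas_sets[OF s\<eta> mR] mx by (subst distr_distr) auto
    also have "\<dots> = \<rho> e" by (simp add: haar_right[OF H RG] \<rho>_def)
    finally show ?thesis .
  qed
  define P where "P \<mu> \<longleftrightarrow> sets \<mu> = sets borel \<and> prob_space \<mu> \<and>
       emeasure \<mu> (orthogonal_comp V \<inter> sphere 0 1) = 1 \<and>
       (\<forall>S\<in>orth_fix (orthogonal_comp (orthogonal_comp V)). distr \<mu> borel (\<lambda>u. S *v u) = \<mu>)" for \<mu>
  have Pe: "P (\<rho> e)"
  proof -
    have "?G \<subseteq> (\<lambda>T. T *v e) -` ?C"
    proof
      fix T assume T: "T \<in> ?G"
      have "norm (T *v e) = 1" using orth_norm[OF of_orth[OF T]] e(2) by simp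
      then show "T \<in> (\<lambda>T. T *v e) -` ?C" using of_perp[OF T e(1)] by simp
    qed
    then have "emeasure \<eta> ?G \<le> emeasure \<eta> ((\<lambda>T. T *v e) -` ?C)"
      using measurable_sets_borel[OF mx C] by (intro emeasure_mono) (auto simp: s\<eta>)
    also have "\<dots> = emeasure (\<rho> e) ?C"
      unfolding \<rho>_def using mx' C by (simp add: emeasure_distr space_borel_eq[OF s\<eta>])
    finally have "1 \<le> emeasure (\<rho> e) ?C" using g\<eta> by simp
    moreover have "emeasure (\<rho> e) ?C \<le> 1" by (rule prob_space.emeasure_le_1[OF p\<rho>])
    ultimately have c1: "emeasure (\<rho> e) ?C = 1" by (rule antisym[rotated])
    have inv: "distr (\<rho> e) borel (\<lambda>u. S *v u) = \<rho> e" if S: "S \<in> ?G" for S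
    proof -
      have mS: "(\<lambda>u. S *v u) \<in> borel_measurable (borel :: (real^'n) measure)" by measurable
      have mS2: "(\<lambda>T. S ** T) \<in> borel_measurable (borel :: (real^'n^'n) measure)" by measurable
      have "distr (\<rho> e) borel (\<lambda>u. S *v u) = distr \<eta> borel ((\<lambda>u. S *v u) \<circ> (\<lambda>T. T *v e))"
        unfolding \<rho>_def using mx' mS by (subst distr_distr) auto
      also have "\<dots> = distr \<eta> borel ((\<lambda>T. T *v e) \<circ> (\<lambda>T. S ** T))"
        by (simp add: o_def matrix_vector_mul_assoc)
      also have "\<dots> = distr (distr \<eta> borel (\<lambda>T. S ** T)) borel (\<lambda>T. T *v e)"
        using meas_sets[OF s\<eta> mS2] mx by (subst distr_distr) auto
      also have "\<dots> = \<rho> e" by (simp add: i\<eta>[OF S] \<rho>_def)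
      finally show ?thesis .
    qed
    show ?thesis unfolding P_def GG using s\<rho> p\<rho> c1 inv by blast
  qed
  have Pu: "\<mu> = \<rho> e" if P: "P \<mu>" for \<mu>
  proof -
    have s\<mu>: "sets \<mu> = sets borel" and p\<mu>: "prob_space \<mu>" and c\<mu>: "emeasure \<mu> ?C = 1"
      and i\<mu>: "\<And>S. S \<in> ?G \<Longrightarrow> distr \<mu> borel (\<lambda>u. S *v u) = \<mu>"
      using P unfolding P_def GG by auto
    have mF: "(\<lambda>x. fst x *v snd x) \<in> borel_measurable (\<eta> \<Otimes>\<^sub>M \<mu>)"
      by (rule meas_pair[OF s\<eta> s\<mu> meas_mv_pair])
    have AEG: "AE T in \<eta>. T \<in> ?G" by (rule AE_haar[OF H])
    have AEC: "AE x in \<mu>. x \<in> ?C" by (rule AE_of_emeasure_1[OF p\<mu> _ c\<mu>]) (simp add: s\<mu> C)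
    show ?thesis
    proof (rule measure_eqI)
      show "sets \<mu> = sets (\<rho> e)" by (simp add: s\<mu> s\<rho>)
      fix A assume "A \<in> sets \<mu>"
      then have A: "A \<in> sets borel" using s\<mu> by simp
      have "emeasure \<mu> A = (\<integral>\<^sup>+T. emeasure \<mu> A \<partial>\<eta>)"
        using prob_space.emeasure_space_1[OF p\<eta>] by simp
      also have "\<dots> = (\<integral>\<^sup>+T. emeasure \<mu> {x. T *v x \<in> A} \<partial>\<eta>)"
      proof (rule nn_integral_cong_AE)
        show "AE T in \<eta>. emeasure \<mu> A = emeasure \<mu> {x. T *v x \<in> A}"
          using AEG
        proof eventually_elim
          case (elim T)
          have m: "(\<lambda>x. T *v x) \<in> borel_measurable \<mu>" by (rule meas_sets[OF s\<mu>]) measurable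
          have "emeasure \<mu> {x. T *v x \<in> A} = emeasure (distr \<mu> borel (\<lambda>x. T *v x)) A"
            using m A by (simp add: emeasure_distr space_borel_eq[OF s\<mu>] vimage_def)
          then show ?case using i\<mu>[OF elim] by simp
        qed
      qed
      also have "\<dots> = emeasure (distr (\<eta> \<Otimes>\<^sub>M \<mu>) borel (\<lambda>x. fst x *v snd x)) A"
        using emeasure_distr_pair(1)[OF s\<eta> s\<mu> p\<eta> p\<mu> mF A] by simp
      also have "\<dots> = (\<integral>\<^sup>+x. emeasure \<eta> {T. T *v x \<in> A} \<partial>\<mu>)"
        using emeasure_distr_pair(2)[OF s\<eta> s\<mu> p\<eta> p\<mu> mF A] by simp
      also have "\<dots> = (\<integral>\<^sup>+x. emeasure (\<rho> e) A \<partial>\<mu>)"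
      proof (rule nn_integral_cong_AE)
        show "AE x in \<mu>. emeasure \<eta> {T. T *v x \<in> A} = emeasure (\<rho> e) A"
          using AEC
        proof eventually_elim
          case (elim x)
          have "emeasure \<eta> {T. T *v x \<in> A} = emeasure (\<rho> x) A"
            unfolding \<rho>_def using mx' A by (simp add: emeasure_distr space_borel_eq[OF s\<eta>] vimage_def)
          then show ?case using \<rho>_eq[of x] elim by simp
        qed
      qed
      also have "\<dots> = emeasure (\<rho> e) A" using prob_space.emeasure_space_1[OF p\<mu>] by simp
      finally show "emeasure \<mu> A = emeasure (\<rho> e) A" .
    qed
  qed
  have "unif_sphere (orthogonal_comp V) = The P"
    unfolding unif_sphere_def by (rule arg_cong[where f=The]) (simp add: P_def fun_eq_iff)
  also have "\<dots> = \<rho> e" by (rule the_equality[where P=P, OF Pe Pu])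
  finally show ?thesis by (simp add: \<rho>_def)
qed



lemma unit_perp_exists:
  fixes V :: "(real^'n) set"
  assumes V: "subspace V" "V \<noteq> UNIV"
  obtains e where "e \<in> orthogonal_comp V" "norm e = 1"
proof -
  obtain x where x: "x \<notin> V" using V(2) by auto
  define b where "b = x - orth_proj V x"
  have bV: "b \<in> orthogonal_comp V" unfolding b_def by (rule orth_proj(2)[OF V(1)])
  have b0: "b \<noteq> 0" unfolding b_def using x orth_proj(1)[OF V(1), of x] by (metis eq_iff_diff_eq_0)
  have "sgn b \<in> orthogonal_comp V" unfolding sgn_div_norm
    by (rule subspace_scale[OF subspace_orthogonal_comp bV])
  moreover have "norm (sgn b) = 1" using b0 by (simp add: norm_sgn)
  ultimately show ?thesis using that by blast
qed

theorem lemma2: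
  fixes N :: "'i set" and x :: "'i \<Rightarrow> real^'n"
    and M :: "'a measure" and y :: "'a \<Rightarrow> real^'n"
  assumes "finite N"
    and "inj_on x N" and "independent (x ` N)"
    and "card N < CARD('n) - 1"
    and "prob_space M"
    and "y \<in> borel_measurable M"
  defines "V \<equiv> span (x ` N)"
  shows "((\<forall>S\<in>orth_fix V. distr M borel (\<lambda>\<omega>. S *v y \<omega>) = distr M borel y)
          \<longleftrightarrow>
          distr (Haar_fix V \<Otimes>\<^sub>M distr M borel y) borel (\<lambda>(T, v). T *v v)
            = distr M borel y)
      \<and> ((\<forall>S\<in>orth_fix V. distr M borel (\<lambda>\<omega>. S *v y \<omega>) = distr M borel y)
          \<longleftrightarrow>
          distr M borel y
            = distr (distr M borel y \<Otimes>\<^sub>M unif_sphere (orthogonal_comp V)) borel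
                (\<lambda>(v, u). orth_proj V v + norm (v - orth_proj V v) *\<^sub>R u))"
proof -
  let ?G = "orth_fix V"
  define Y where "Y = distr M borel y"
  define \<eta> where "\<eta> = Haar_fix V"
  define \<sigma> where "\<sigma> = unif_sphere (orthogonal_comp V)"
  have V: "subspace V" unfolding V_def by (rule subspace_span)
  have "dim V = card N"
    unfolding V_def using assms(2,3) by (simp add: dim_eq_card_independent card_image)
  then have dV: "dim V < CARD('n)" using assms(4) by simp
  have VU: "V \<noteq> UNIV"
  proof
    assume "V = UNIV"
    then have "dim V = CARD('n)" by simp
    then show False using dV by simp
  qed
  obtain e where e: "e \<in> orthogonal_comp V" "norm e = 1" using unit_perp_exists[OF V VU] by blast
  have H: "haar V \<eta>" unfolding \<eta>_def by (rule Haar_fix_haar[OF V])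
  have s\<eta>: "sets \<eta> = sets borel" and p\<eta>: "prob_space \<eta>"
    and i\<eta>: "\<And>S. S \<in> ?G \<Longrightarrow> distr \<eta> borel (\<lambda>T. S ** T) = \<eta>"
    using H by (auto simp: haar_def)
  have AEG: "AE T in \<eta>. T \<in> ?G" by (rule AE_haar[OF H])
  have sY: "sets Y = sets borel" by (simp add: Y_def)
  have pY: "prob_space Y" unfolding Y_def by (rule prob_space.prob_space_distr[OF assms(5,6)])
  have \<sigma>eq: "\<sigma> = distr \<eta> borel (\<lambda>T. T *v e')" if "e' \<in> orthogonal_comp V" "norm e' = 1" for e'
    unfolding \<sigma>_def by (rule unif_sphere_eq[OF V H that])
  have mx: "(\<lambda>T. T *v z) \<in> borel_measurable (borel :: (real^'n^'n) measure)" for z :: "real^'n"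
    by (rule borel_measurable_mvmult[OF measurable_ident_sets[OF refl] borel_measurable_const])
  have s\<sigma>: "sets \<sigma> = sets borel" by (simp add: \<sigma>eq[OF e])
  have p\<sigma>: "prob_space \<sigma>" unfolding \<sigma>eq[OF e]
    by (rule prob_space.prob_space_distr[OF p\<eta> meas_sets[OF s\<eta> mx]])
  define Fm where "Fm = (\<lambda>p :: (real^'n^'n) \<times> (real^'n). fst p *v snd p)"
  have Fm_eq: "(\<lambda>(T, v). T *v v) = Fm" by (auto simp: Fm_def fun_eq_iff)
  have mF: "Fm \<in> borel_measurable (\<eta> \<Otimes>\<^sub>M Y)" unfolding Fm_def by (rule meas_pair[OF s\<eta> sY meas_mv_pair])
  define \<Phi> where "\<Phi> = distr (\<eta> \<Otimes>\<^sub>M Y) borel Fm"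
  have s\<Phi>: "sets \<Phi> = sets borel" by (simp add: \<Phi>_def)
  have \<Phi>1: "emeasure \<Phi> A = (\<integral>\<^sup>+T. emeasure Y {v. T *v v \<in> A} \<partial>\<eta>)" if A: "A \<in> sets borel" for A
    unfolding \<Phi>_def using emeasure_distr_pair(1)[OF s\<eta> sY p\<eta> pY mF A] by (simp add: Fm_def)
  have \<Phi>2: "emeasure \<Phi> A = (\<integral>\<^sup>+v. emeasure \<eta> {T. T *v v \<in> A} \<partial>Y)" if A: "A \<in> sets borel" for A
    unfolding \<Phi>_def using emeasure_distr_pair(2)[OF s\<eta> sY p\<eta> pY mF A] by (simp add: Fm_def)
  have mS: "(\<lambda>v. S *v v) \<in> borel_measurable (borel :: (real^'n) measure)" for S :: "real^'n^'n"
    by (rule linear_borel_measurable) simp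
  have i_eq: "(\<forall>S\<in>?G. distr M borel (\<lambda>\<omega>. S *v y \<omega>) = Y) \<longleftrightarrow> (\<forall>S\<in>?G. distr Y borel (\<lambda>v. S *v v) = Y)"
  proof -
    have "distr Y borel (\<lambda>v. S *v v) = distr M borel (\<lambda>\<omega>. S *v y \<omega>)" for S :: "real^'n^'n"
      unfolding Y_def using assms(6) mS by (subst distr_distr) (auto simp: o_def)
    then show ?thesis by simp
  qed
  have inv_Y: "distr Y borel (\<lambda>v. S *v v) = Y" if PY: "\<Phi> = Y" and S: "S \<in> ?G" for S
  proof (rule measure_eqI)
    show "sets (distr Y borel (\<lambda>v. S *v v)) = sets Y" by (simp add: sY)
    fix A assume "A \<in> sets (distr Y borel (\<lambda>v. S *v v))"
    then have A: "A \<in> sets borel" by simp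
    define \<Psi> where "\<Psi> T = emeasure Y {v. T *v v \<in> A}" for T
    have m\<Psi>: "\<Psi> \<in> borel_measurable borel"
      unfolding \<Psi>_def using emeasure_section_meas[OF s\<eta> sY pY meas_mv_pair A] by simp
    have mS2: "(\<lambda>T. S ** T) \<in> borel_measurable (borel :: (real^'n^'n) measure)" by measurable
    have pre: "(\<lambda>v. S *v v) -` A \<in> sets borel" by (rule measurable_sets_borel[OF mS A])
    have "emeasure (distr Y borel (\<lambda>v. S *v v)) A = emeasure Y ((\<lambda>v. S *v v) -` A)"
      using meas_sets[OF sY mS] A by (simp add: emeasure_distr space_borel_eq[OF sY])
    also have "\<dots> = emeasure \<Phi> ((\<lambda>v. S *v v) -` A)" using PY by simp
    also have "\<dots> = (\<integral>\<^sup>+T. emeasure Y {v. T *v v \<in> (\<lambda>v. S *v v) -` A} \<partial>\<eta>)"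
      by (rule \<Phi>1[OF pre])
    also have "\<dots> = (\<integral>\<^sup>+T. \<Psi> (S ** T) \<partial>\<eta>)"
      by (simp add: \<Psi>_def matrix_vector_mul_assoc vimage_def)
    also have "\<dots> = (\<integral>\<^sup>+T. \<Psi> T \<partial>(distr \<eta> borel (\<lambda>T. S ** T)))"
    proof (rule nn_integral_distr[symmetric])
      show "(\<lambda>T. S ** T) \<in> \<eta> \<rightarrow>\<^sub>M borel" by (rule meas_sets[OF s\<eta> mS2])
      show "\<Psi> \<in> borel_measurable (distr \<eta> borel (\<lambda>T. S ** T))"
        by (rule meas_sets[OF _ m\<Psi>]) simp
    qed
    also have "\<dots> = (\<integral>\<^sup>+T. \<Psi> T \<partial>\<eta>)" by (simp add: i\<eta>[OF S])
    also have "\<dots> = emeasure \<Phi> A" unfolding \<Psi>_def by (rule \<Phi>1[OF A, symmetric])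
    also have "\<dots> = emeasure Y A" using PY by simp
    finally show "emeasure (distr Y borel (\<lambda>v. S *v v)) A = emeasure Y A" .
  qed
  have Y_inv: "\<Phi> = Y" if inv: "\<forall>S\<in>?G. distr Y borel (\<lambda>v. S *v v) = Y"
  proof (rule measure_eqI)
    show "sets \<Phi> = sets Y" by (simp add: s\<Phi> sY)
    fix A assume "A \<in> sets \<Phi>"
    then have A: "A \<in> sets borel" using s\<Phi> by simp
    have "emeasure \<Phi> A = (\<integral>\<^sup>+T. emeasure Y {v. T *v v \<in> A} \<partial>\<eta>)" by (rule \<Phi>1[OF A])
    also have "\<dots> = (\<integral>\<^sup>+T. emeasure Y A \<partial>\<eta>)"
    proof (rule nn_integral_cong_AE)
      show "AE T in \<eta>. emeasure Y {v. T *v v \<in> A} = emeasure Y A"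
        using AEG
      proof eventually_elim
        case (elim T)
        have "emeasure Y {v. T *v v \<in> A} = emeasure (distr Y borel (\<lambda>v. T *v v)) A"
          using meas_sets[OF sY mS] A by (simp add: emeasure_distr space_borel_eq[OF sY] vimage_def)
        then show ?case using inv elim by simp
      qed
    qed
    also have "\<dots> = emeasure Y A" using prob_space.emeasure_space_1[OF p\<eta>] by simp
    finally show "emeasure \<Phi> A = emeasure Y A" .
  qed
  have R_eq: "distr (Y \<Otimes>\<^sub>M \<sigma>) borel (\<lambda>(v, u). orth_proj V v + norm (v - orth_proj V v) *\<^sub>R u) = \<Phi>"
  proof -
    define G2 where "G2 = (\<lambda>p :: (real^'n) \<times> (real^'n). orth_proj V (fst p) + norm (fst p - orth_proj V (fst p)) *\<^sub>R snd p)"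
    have G2_eq: "(\<lambda>(v, u). orth_proj V v + norm (v - orth_proj V v) *\<^sub>R u) = G2"
      by (auto simp: G2_def fun_eq_iff)
    have mP[measurable]: "orth_proj V \<in> borel_measurable borel" by (rule orth_proj_meas[OF V])
    have mG0: "G2 \<in> borel_measurable ((borel :: (real^'n) measure) \<Otimes>\<^sub>M (borel :: (real^'n) measure))"
      unfolding G2_def by measurable
    have mG: "G2 \<in> borel_measurable (Y \<Otimes>\<^sub>M \<sigma>)" by (rule meas_pair[OF sY s\<sigma> mG0])
    have key: "emeasure \<sigma> {u. G2 (v, u) \<in> A} = emeasure \<eta> {T. T *v v \<in> A}" if A: "A \<in> sets borel" for v A
    proof -
      define P where "P = orth_proj V v"
      define r where "r = norm (v - P)"
      have PV: "P \<in> V" unfolding P_def by (rule orth_proj(1)[OF V])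
      have vP: "v - P \<in> orthogonal_comp V" unfolding P_def by (rule orth_proj(2)[OF V])
      have mTv: "{T. T *v v \<in> A} \<in> sets \<eta>"
        using measurable_sets_borel[OF mx A] s\<eta> by (simp add: vimage_def)
      have AT: "AE T in \<eta>. T *v v = P + T *v (v - P)"
        using AEG
      proof eventually_elim
        case (elim T)
        have "T *v v = T *v P + T *v (v - P)" by (simp add: matrix_vector_mult_diff_distrib)
        then show ?case using of_fix[OF elim PV] by simp
      qed
      show ?thesis
      proof (cases "r = 0")
        case True
        then have vP0: "v = P" unfolding r_def by simp
        have g: "G2 (v, u) = P + r *\<^sub>R u" for u by (simp add: G2_def P_def r_def)
        have e1: "{u. G2 (v, u) \<in> A} = {u. v \<in> A}"
          unfolding g using True vP0 by simp
        have e2: "emeasure \<eta> {T. T *v v \<in> A} = emeasure \<eta> {T. v \<in> A}"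
        proof (rule emeasure_eq_AE)
          show "AE T in \<eta>. (T \<in> {T. T *v v \<in> A}) = (T \<in> {T. v \<in> A})"
            using AEG
          proof eventually_elim
            case (elim T)
            then show ?case using of_fix[OF elim PV] vP0 by simp
          qed
          show "{T. T *v v \<in> A} \<in> sets \<eta>" by (rule mTv)
          show "{T. v \<in> A} \<in> sets \<eta>" by (cases "v \<in> A") (auto simp: s\<eta>)
        qed
        show ?thesis
        proof (cases "v \<in> A")
          case True
          then show ?thesis unfolding e1 e2
            using prob_space.emeasure_space_1[OF p\<sigma>] prob_space.emeasure_space_1[OF p\<eta>]
            by (simp add: space_borel_eq[OF s\<sigma>] space_borel_eq[OF s\<eta>])
        next
          case False
          then show ?thesis unfolding e1 e2 by simp
        qed
      next
        case False
        then have rpos: "r > 0" unfolding r_def by simp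
        define e' where "e' = (1 / r) *\<^sub>R (v - P)"
        have e'V: "e' \<in> orthogonal_comp V" unfolding e'_def
          by (rule subspace_scale[OF subspace_orthogonal_comp vP])
        have ne': "norm e' = 1" unfolding e'_def using rpos by (simp add: r_def)
        have vr: "v - P = r *\<^sub>R e'" using rpos by (simp add: e'_def)
        have mu: "(\<lambda>u. P + r *\<^sub>R u) \<in> borel_measurable (borel :: (real^'n) measure)"
          by (intro borel_measurable_continuous_onI continuous_intros)
        have B: "{u. P + r *\<^sub>R u \<in> A} \<in> sets borel"
          using measurable_sets_borel[OF mu A] by (simp add: vimage_def)
        have "emeasure \<sigma> {u. G2 (v, u) \<in> A} = emeasure \<sigma> {u. P + r *\<^sub>R u \<in> A}"
          by (simp add: G2_def P_def r_def)
        also have "\<dots> = emeasure \<eta> ((\<lambda>T. T *v e') -` {u. P + r *\<^sub>R u \<in> A})"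
          unfolding \<sigma>eq[OF e'V ne'] using meas_sets[OF s\<eta> mx] B
          by (simp add: emeasure_distr space_borel_eq[OF s\<eta>])
        also have "\<dots> = emeasure \<eta> {T. T *v v \<in> A}"
        proof (rule emeasure_eq_AE)
          show "AE T in \<eta>. (T \<in> (\<lambda>T. T *v e') -` {u. P + r *\<^sub>R u \<in> A}) = (T \<in> {T. T *v v \<in> A})"
            using AT by eventually_elim (simp add: vr matrix_vector_mult_scaleR)
          show "(\<lambda>T. T *v e') -` {u. P + r *\<^sub>R u \<in> A} \<in> sets \<eta>"
            using measurable_sets_borel[OF mx B] s\<eta> by simp
          show "{T. T *v v \<in> A} \<in> sets \<eta>" by (rule mTv)
        qed
        finally show ?thesis .
      qed
    qed
    show ?thesis unfolding G2_eq
    proof (rule measure_eqI)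
      show "sets (distr (Y \<Otimes>\<^sub>M \<sigma>) borel G2) = sets \<Phi>" by (simp add: s\<Phi>)
      fix A assume "A \<in> sets (distr (Y \<Otimes>\<^sub>M \<sigma>) borel G2)"
      then have A: "A \<in> sets borel" by simp
      have "emeasure (distr (Y \<Otimes>\<^sub>M \<sigma>) borel G2) A = (\<integral>\<^sup>+v. emeasure \<sigma> {u. G2 (v, u) \<in> A} \<partial>Y)"
        by (rule emeasure_distr_pair(1)[OF sY s\<sigma> pY p\<sigma> mG A])
      also have "\<dots> = (\<integral>\<^sup>+v. emeasure \<eta> {T. T *v v \<in> A} \<partial>Y)"
        by (rule nn_integral_cong) (rule key[OF A])
      also have "\<dots> = emeasure \<Phi> A" by (rule \<Phi>2[OF A, symmetric])
      finally show "emeasure (distr (Y \<Otimes>\<^sub>M \<sigma>) borel G2) A = emeasure \<Phi> A" .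
    qed
  qed
  have main: "(\<forall>S\<in>?G. distr Y borel (\<lambda>v. S *v v) = Y) \<longleftrightarrow> \<Phi> = Y"
    using inv_Y Y_inv by blast
  show ?thesis
    unfolding Y_def[symmetric] \<eta>_def[symmetric] \<sigma>_def[symmetric] Fm_eq \<Phi>_def[symmetric] R_eq i_eq
    using main by auto
qed


end
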